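(* Let $A$ be a real sequence over $\mathbb{Z}^2$ with $|A|=3.99$, maximal multiplicity $\le\frac12$, and such that no line in $\mathbb{R}^2$ contains more than $\frac32$ points of $A$. Suppose there exists a line $\ell$ containing $\frac32$ points of $A$. Then $\Sigma^1_{\mathbb{R}}(A)$ contains a lattice point of $\mathbb{Z}^2$ in its interior.
   Context: A real sequence $A$ over $\mathbb{Z}^2$ is a family of pairs $(a_i,\mu_i)$ of distinct points $a_i\in\mathbb{Z}^2$ and non-negative reals $\mu_i$ (multiplicities); $|A|=\sum_i\mu_i$. A set $X$ contains $\sum_{i:a_i\in X}\mu_i$ points of $A$. $\Sigma^1_{\mathbb{R}}(A)=\{\sum_i t_ia_i : t_i\in[0,\mu_i],\ \sum_i t_i=1\}$. *)

theory Defs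
  imports "HOL-Analysis.Analysis"
begin

text \<open>A real sequence over Z^2 is represented by its multiplicity function
  mu :: int * int => real, nonnegative with finite support; the points of the
  sequence are the a with mu a > 0 (points of multiplicity 0 contribute nothing).\<close>

definition real_seq :: "(int \<times> int \<Rightarrow> real) \<Rightarrow> bool" where
  "real_seq mu \<longleftrightarrow> (\<forall>a. 0 \<le> mu a) \<and> finite {a. mu a \<noteq> 0}"

definition supp_seq :: "(int \<times> int \<Rightarrow> real) \<Rightarrow> (int \<times> int) set" where
  "supp_seq mu = {a. mu a \<noteq> 0}"

definition emb :: "int \<times> int \<Rightarrow> real \<times> real" where
  "emb a = (of_int (fst a), of_int (snd a))"

definition seq_size :: "(int \<times> int \<Rightarrow> real) \<Rightarrow> real" where
  "seq_size mu = (\<Sum>a\<in>supp_seq mu. mu a)"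

definition points_in :: "(int \<times> int \<Rightarrow> real) \<Rightarrow> (real \<times> real) set \<Rightarrow> real" where
  "points_in mu X = (\<Sum>a\<in>{a\<in>supp_seq mu. emb a \<in> X}. mu a)"

definition is_line :: "(real \<times> real) set \<Rightarrow> bool" where
  "is_line L \<longleftrightarrow> (\<exists>p v. v \<noteq> 0 \<and> L = {p + t *\<^sub>R v | t. True})"

definition Sigma1R :: "(int \<times> int \<Rightarrow> real) \<Rightarrow> (real \<times> real) set" where
  "Sigma1R mu = {(\<Sum>a\<in>supp_seq mu. t a *\<^sub>R emb a) | t.
      (\<forall>a\<in>supp_seq mu. 0 \<le> t a \<and> t a \<le> mu a) \<and> (\<Sum>a\<in>supp_seq mu. t a) = 1}"

end

theory Submission
  imports Defs
begin

lemma interior_by_witness: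
  fixes S :: "'a::euclidean_space set"
  assumes cvx: "convex S"
    and wit: "\<And>u. u \<noteq> 0 \<Longrightarrow> \<exists>x\<in>S. u \<bullet> x > u \<bullet> z"
  shows "z \<in> interior S"
proof (rule ccontr)
  assume nz: "z \<notin> interior S"
  have ne: "S \<noteq> {}"
  proof -
    obtain i :: 'a where "i \<in> Basis" using nonempty_Basis by blast
    then have "i \<noteq> 0" by auto
    then show ?thesis using wit by blast
  qed
  show False
  proof (cases "z \<in> closure S")
    case False
    have "convex (closure S)" "closed (closure S)" "closure S \<noteq> {}"
      using cvx ne by (auto simp: convex_closure)
    from supporting_hyperplane_closed_point[OF this False]
    obtain a b where ab: "inner a z < b" "\<forall>x\<in>closure S. inner a x \<ge> b" by blast
    have "a \<noteq> 0" using ab ne closure_subset by fastforce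
    then have "-a \<noteq> 0" by simp
    from wit[OF this] obtain x where x: "x \<in> S" "(-a) \<bullet> x > (-a) \<bullet> z" by blast
    have "a \<bullet> x \<ge> b" using ab(2) closure_subset x(1) by blast
    then show False using ab(1) x(2) by (simp add: inner_minus_left)
  next
    case True
    show False
    proof (cases "z \<in> rel_interior S")
      case False
      have "\<exists>a. a \<noteq> 0 \<and> (\<forall>y\<in>closure S. a \<bullet> z \<le> a \<bullet> y)"
        by (rule supporting_hyperplane_relative_frontier[OF cvx True False]) blast
      then obtain a where a: "a \<noteq> 0" "\<And>y. y \<in> closure S \<Longrightarrow> a \<bullet> z \<le> a \<bullet> y" by blast
      have "-a \<noteq> 0" using a by simp
      from wit[OF this] obtain x where x: "x \<in> S" "(-a) \<bullet> x > (-a) \<bullet> z" by blast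
      have "a \<bullet> z \<le> a \<bullet> x" using a(2) closure_subset x(1) by blast
      then show False using x(2) by (simp add: inner_minus_left)
    next
      case True
      have ig: "interior S = (if aff_dim S = int DIM('a) then rel_interior S else {})"
        by (rule interior_rel_interior_gen)
      have "aff_dim S \<noteq> int DIM('a)"
      proof
        assume "aff_dim S = int DIM('a)"
        then have "interior S = rel_interior S" using ig by simp
        then show False using True nz by simp
      qed
      then have lt: "aff_dim S < int DIM('a)" using aff_dim_le_DIM[of S] by linarith
      have zS: "z \<in> S" using True rel_interior_subset by blast
      have "aff_dim S = int (dim ((\<lambda>x. x - z) ` S))"
        by (rule aff_dim_eq_dim_subtract[OF hull_inc[OF zS]])
      with lt have "dim ((\<lambda>x. x - z) ` S) < DIM('a)" by linarith
      from lowdim_subset_hyperplane[OF this] obtain a where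
        ab: "a \<noteq> 0" "span ((\<lambda>x. x - z) ` S) \<subseteq> {x. a \<bullet> x = 0}" by blast
      have sub: "\<And>x. x \<in> S \<Longrightarrow> a \<bullet> x = a \<bullet> z"
      proof -
        fix x assume "x \<in> S"
        then have "x - z \<in> span ((\<lambda>x. x - z) ` S)" by (intro span_base) blast
        then have "a \<bullet> (x - z) = 0" using ab(2) by blast
        then show "a \<bullet> x = a \<bullet> z" by (simp add: inner_diff_right)
      qed
      from wit[OF ab(1)] obtain x where "x \<in> S" "a \<bullet> x > a \<bullet> z" by blast
      then show False using sub by force
    qed
  qed
qed

lemma left_greedy:
  fixes R :: "'a set" and m :: "'a \<Rightarrow> real" and g :: "'a \<Rightarrow> int"
  assumes fin: "finite R" and nn: "\<forall>a\<in>R. 0 \<le> m a"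
    and tot: "s \<le> (\<Sum>a\<in>R. m a)" and s0: "0 < s"
  shows "\<exists>a1\<in>R. (\<Sum>a\<in>R. if g a < g a1 then m a else 0) < s \<and>
                 s \<le> (\<Sum>a\<in>R. if g a \<le> g a1 then m a else 0)"
proof -
  define C where "C = {a\<in>R. s \<le> (\<Sum>b\<in>R. if g b \<le> g a then m b else 0)}"
  have "R \<noteq> {}" using tot s0 by auto
  have "Max (g ` R) \<in> g ` R" using fin \<open>R \<noteq> {}\<close> by simp
  then obtain amax where amax: "amax \<in> R" "g amax = Max (g ` R)" by (metis imageE)
  have "\<forall>b\<in>R. g b \<le> g amax" using amax fin by simp
  then have "(\<Sum>b\<in>R. if g b \<le> g amax then m b else 0) = (\<Sum>b\<in>R. m b)" by (intro sum.cong) auto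
  then have "amax \<in> C" using amax tot unfolding C_def by simp
  then have Cne: "g ` C \<noteq> {}" by blast
  have Cfin: "finite (g ` C)" using fin unfolding C_def by simp
  define c1 where "c1 = Min (g ` C)"
  have "c1 \<in> g ` C" using Cne Cfin c1_def by simp
  then obtain a1 where a1: "a1 \<in> C" "g a1 = c1" by blast
  have minC: "\<And>a. a \<in> C \<Longrightarrow> c1 \<le> g a" using Cfin c1_def by simp
  have a1R: "a1 \<in> R" using a1 C_def by simp
  have le: "s \<le> (\<Sum>a\<in>R. if g a \<le> g a1 then m a else 0)" using a1 C_def by simp
  have lt: "(\<Sum>a\<in>R. if g a < g a1 then m a else 0) < s"
  proof (rule ccontr)
    assume "\<not> ?thesis"
    then have ge: "s \<le> (\<Sum>a\<in>R. if g a < g a1 then m a else 0)" by simp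
    define L where "L = {a\<in>R. g a < g a1}"
    have "L \<noteq> {}"
    proof
      assume "L = {}"
      then have "(\<Sum>a\<in>R. if g a < g a1 then m a else 0) = 0" unfolding L_def by (intro sum.neutral) auto
      then show False using ge s0 by simp
    qed
    have Lfin: "finite (g ` L)" using fin L_def by simp
    define c' where "c' = Max (g ` L)"
    have "c' \<in> g ` L" using Lfin \<open>L \<noteq> {}\<close> c'_def by simp
    then obtain a' where a': "a' \<in> L" "g a' = c'" by blast
    have maxL: "\<And>a. a \<in> L \<Longrightarrow> g a \<le> c'" using Lfin c'_def by simp
    have eqv: "\<And>a. a \<in> R \<Longrightarrow> (g a \<le> g a') = (g a < g a1)"
    proof -
      fix a assume "a \<in> R"
      show "(g a \<le> g a') = (g a < g a1)"
        using maxL[of a] a' \<open>a \<in> R\<close> unfolding L_def by auto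
    qed
    have "(\<Sum>a\<in>R. if g a \<le> g a' then m a else 0) = (\<Sum>a\<in>R. if g a < g a1 then m a else 0)"
      by (intro sum.cong) (auto simp: eqv)
    then have "a' \<in> C" using ge a' unfolding C_def L_def by simp
    then have "c1 \<le> g a'" by (rule minC)
    then show False using a' a1 unfolding L_def by simp
  qed
  show ?thesis using a1R lt le by blast
qed

lemma greedy_pair:
  fixes R :: "'a set" and m :: "'a \<Rightarrow> real" and g :: "'a \<Rightarrow> int"
  assumes fin: "finite R" and inj: "inj_on g R" and bnd: "\<forall>a\<in>R. 0 \<le> m a \<and> m a \<le> 1/2"
    and tot: "(\<Sum>a\<in>R. m a) = 3/2" and s1: "1/2 \<le> s" and s2: "s \<le> 1"
  shows "\<exists>\<rho>1 \<rho>2. (\<forall>a\<in>R. 0 \<le> \<rho>1 a \<and> \<rho>1 a \<le> m a \<and> 0 \<le> \<rho>2 a \<and> \<rho>2 a \<le> m a) \<and>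
     (\<Sum>a\<in>R. \<rho>1 a) = s \<and> (\<Sum>a\<in>R. \<rho>2 a) = s \<and>
     1 \<le> (\<Sum>a\<in>R. \<rho>2 a * g a) - (\<Sum>a\<in>R. \<rho>1 a * g a)"
proof -
  have nn: "\<forall>a\<in>R. 0 \<le> m a" using bnd by auto
  have sT: "s \<le> (\<Sum>a\<in>R. m a)" using tot s2 by simp
  have s0: "0 < s" using s1 by simp
  obtain a1 where a1: "a1 \<in> R" "(\<Sum>a\<in>R. if g a < g a1 then m a else 0) < s"
      "s \<le> (\<Sum>a\<in>R. if g a \<le> g a1 then m a else 0)"
    using left_greedy[OF fin nn sT s0, of g] by blast
  obtain a2 where a2: "a2 \<in> R" "(\<Sum>a\<in>R. if - g a < - g a2 then m a else 0) < s"
      "s \<le> (\<Sum>a\<in>R. if - g a \<le> - g a2 then m a else 0)"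
    using left_greedy[OF fin nn sT s0, of "\<lambda>a. - g a"] by blast
  define c1 where "c1 = g a1"
  define c2 where "c2 = g a2"
  have e1: "\<And>a. a \<in> R \<Longrightarrow> (g a = c1) = (a = a1)" using inj a1(1) unfolding c1_def inj_on_def by blast
  have e2: "\<And>a. a \<in> R \<Longrightarrow> (g a = c2) = (a = a2)" using inj a2(1) unfolding c2_def inj_on_def by blast
  define l1 where "l1 = (\<Sum>a\<in>R. if g a < c1 then m a else 0)"
  define r2 where "r2 = (\<Sum>a\<in>R. if g a > c2 then m a else 0)"
  have l1s: "l1 < s" using a1(2) unfolding l1_def c1_def by simp
  have r2s: "r2 < s" using a2(2) unfolding r2_def c2_def by (simp add: less_minus_iff)
  have split1: "(\<Sum>a\<in>R. if g a \<le> c1 then m a else 0) = l1 + m a1"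
  proof -
    have "(\<Sum>a\<in>R. if g a \<le> c1 then m a else 0) = (\<Sum>a\<in>R. (if g a < c1 then m a else 0) + (if a = a1 then m a else 0))"
      by (intro sum.cong) (auto simp: e1[symmetric])
    also have "\<dots> = l1 + m a1" unfolding l1_def using fin a1(1) by (simp add: sum.distrib)
    finally show ?thesis .
  qed
  have split2: "(\<Sum>a\<in>R. if g a \<ge> c2 then m a else 0) = r2 + m a2"
  proof -
    have "(\<Sum>a\<in>R. if g a \<ge> c2 then m a else 0) = (\<Sum>a\<in>R. (if g a > c2 then m a else 0) + (if a = a2 then m a else 0))"
      by (intro sum.cong) (auto simp: e2[symmetric])
    also have "\<dots> = r2 + m a2" unfolding r2_def using fin a2(1) by (simp add: sum.distrib)
    finally show ?thesis .
  qed
  have sl1: "s - l1 \<le> m a1" using a1(3) split1 unfolding c1_def by simp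
  have sr2: "s - r2 \<le> m a2" using a2(3) split2 unfolding c2_def by simp
  define \<rho>1 where "\<rho>1 a = (if g a < c1 then m a else 0) + (if a = a1 then s - l1 else 0)" for a
  define \<rho>2 where "\<rho>2 a = (if g a > c2 then m a else 0) + (if a = a2 then s - r2 else 0)" for a
  have b1: "\<forall>a\<in>R. 0 \<le> \<rho>1 a \<and> \<rho>1 a \<le> m a"
    using nn sl1 l1s unfolding \<rho>1_def c1_def by auto
  have b2: "\<forall>a\<in>R. 0 \<le> \<rho>2 a \<and> \<rho>2 a \<le> m a"
    using nn sr2 r2s unfolding \<rho>2_def c2_def by auto
  have s\<rho>1: "(\<Sum>a\<in>R. \<rho>1 a) = s" unfolding \<rho>1_def using fin a1(1) by (simp add: sum.distrib l1_def[symmetric])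
  have s\<rho>2: "(\<Sum>a\<in>R. \<rho>2 a) = s" unfolding \<rho>2_def using fin a2(1) by (simp add: sum.distrib r2_def[symmetric])
  define h where "h a = (if g a < c1 then real_of_int (c1 - g a) else 0) + (if g a > c2 then real_of_int (g a - c2) else 0)" for a
  have D: "(\<Sum>a\<in>R. \<rho>2 a * g a) - (\<Sum>a\<in>R. \<rho>1 a * g a) = s * (c2 - c1) + (\<Sum>a\<in>R. m a * h a)"
  proof -
    have A: "(\<Sum>a\<in>R. \<rho>1 a * g a) = (\<Sum>a\<in>R. if g a < c1 then m a * g a else 0) + (s - l1) * c1"
    proof -
      have "(\<Sum>a\<in>R. \<rho>1 a * g a) = (\<Sum>a\<in>R. (if g a < c1 then m a * g a else 0) + (if a = a1 then (s - l1) * g a else 0))"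
        by (intro sum.cong) (auto simp: \<rho>1_def distrib_right)
      also have "\<dots> = (\<Sum>a\<in>R. if g a < c1 then m a * g a else 0) + (s - l1) * c1"
        using fin a1(1) by (simp add: sum.distrib c1_def)
      finally show ?thesis .
    qed
    have B: "(\<Sum>a\<in>R. \<rho>2 a * g a) = (\<Sum>a\<in>R. if g a > c2 then m a * g a else 0) + (s - r2) * c2"
    proof -
      have "(\<Sum>a\<in>R. \<rho>2 a * g a) = (\<Sum>a\<in>R. (if g a > c2 then m a * g a else 0) + (if a = a2 then (s - r2) * g a else 0))"
        by (intro sum.cong) (auto simp: \<rho>2_def distrib_right)
      also have "\<dots> = (\<Sum>a\<in>R. if g a > c2 then m a * g a else 0) + (s - r2) * c2"
        using fin a2(1) by (simp add: sum.distrib c2_def)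
      finally show ?thesis .
    qed
    have C: "(\<Sum>a\<in>R. m a * h a) = (c1 * l1 - (\<Sum>a\<in>R. if g a < c1 then m a * g a else 0))
        + ((\<Sum>a\<in>R. if g a > c2 then m a * g a else 0) - c2 * r2)"
    proof -
      have "(\<Sum>a\<in>R. m a * h a) = (\<Sum>a\<in>R. (c1 * (if g a < c1 then m a else 0) - (if g a < c1 then m a * g a else 0))
          + ((if g a > c2 then m a * g a else 0) - c2 * (if g a > c2 then m a else 0)))"
        by (intro sum.cong) (auto simp: h_def algebra_simps)
      also have "\<dots> = (c1 * l1 - (\<Sum>a\<in>R. if g a < c1 then m a * g a else 0))
        + ((\<Sum>a\<in>R. if g a > c2 then m a * g a else 0) - c2 * r2)"
        by (simp add: sum.distrib sum_subtractf sum_distrib_left l1_def r2_def)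
      finally show ?thesis .
    qed
    show ?thesis unfolding A B C by (simp add: algebra_simps)
  qed
  have tot': "(\<Sum>a\<in>R. m a) = 3/2" by (rule tot)
  have m1: "m a1 \<le> 1/2" "m a2 \<le> 1/2" using bnd a1(1) a2(1) by auto
  have pw: "\<And>K w1 w2. (\<And>a. a \<in> R \<Longrightarrow> K - (if a = a1 then w1 else 0) - (if a = a2 then w2 else 0) \<le> h a) \<Longrightarrow>
      K * (3/2) - w1 * m a1 - w2 * m a2 \<le> (\<Sum>a\<in>R. m a * h a)"
  proof -
    fix K w1 w2 :: real
    assume hK: "\<And>a. a \<in> R \<Longrightarrow> K - (if a = a1 then w1 else 0) - (if a = a2 then w2 else 0) \<le> h a"
    have "(\<Sum>a\<in>R. K * m a - (if a = a1 then w1 * m a else 0) - (if a = a2 then w2 * m a else 0)) \<le> (\<Sum>a\<in>R. m a * h a)"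
    proof (rule sum_mono)
      fix a assume "a \<in> R"
      have "m a * (K - (if a = a1 then w1 else 0) - (if a = a2 then w2 else 0)) \<le> m a * h a"
        using hK[OF \<open>a \<in> R\<close>] nn \<open>a \<in> R\<close> by (intro mult_left_mono) auto
      then show "K * m a - (if a = a1 then w1 * m a else 0) - (if a = a2 then w2 * m a else 0) \<le> m a * h a"
        by (auto simp: algebra_simps split: if_splits)
    qed
    also have "(\<Sum>a\<in>R. K * m a - (if a = a1 then w1 * m a else 0) - (if a = a2 then w2 * m a else 0)) = K * (3/2) - w1 * m a1 - w2 * m a2"
      using fin a1(1) a2(1) tot by (simp add: sum_subtractf sum_distrib_left[symmetric])
    finally show "K * (3/2) - w1 * m a1 - w2 * m a2 \<le> (\<Sum>a\<in>R. m a * h a)" by simp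
  qed
  have hnn: "\<And>a. 0 \<le> h a" unfolding h_def by auto
  have "1 \<le> s * (c2 - c1) + (\<Sum>a\<in>R. m a * h a)"
  proof (cases "c2 \<ge> c1 + 2")
    case True
    have "0 \<le> (\<Sum>a\<in>R. m a * h a)" using nn hnn by (intro sum_nonneg) auto
    moreover have "s * 2 \<le> s * (c2 - c1)" using True s1 by (intro mult_left_mono) auto
    ultimately show ?thesis using s1 by linarith
  next
    case F1: False
    show ?thesis
    proof (cases "c2 = c1 + 1")
      case True
      have "a1 \<noteq> a2" using True c1_def c2_def by auto
      have "1 * (3/2) - 1 * m a1 - 1 * m a2 \<le> (\<Sum>a\<in>R. m a * h a)"
      proof (rule pw)
        fix a assume aR: "a \<in> R"
        show "1 - (if a = a1 then 1 else 0) - (if a = a2 then 1 else 0) \<le> h a"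
          using e1[OF aR] e2[OF aR] True hnn[of a] unfolding h_def by (auto split: if_splits)
      qed
      then show ?thesis using True s1 m1 by simp
    next
      case F2: False
      show ?thesis
      proof (cases "c2 = c1")
        case True
        then have "a1 = a2" using e1 a2(1) c2_def by auto
        have "1 * (3/2) - 1 * m a1 - 0 * m a2 \<le> (\<Sum>a\<in>R. m a * h a)"
        proof (rule pw)
          fix a assume aR: "a \<in> R"
          show "1 - (if a = a1 then 1 else 0) - (if a = a2 then 0 else 0) \<le> h a"
            using e1[OF aR] True hnn[of a] unfolding h_def by (auto split: if_splits)
        qed
        then show ?thesis using True m1 by simp
      next
        case F3: False
        show ?thesis
        proof (cases "c2 = c1 - 1")
          case True
          have "a1 \<noteq> a2" using True c1_def c2_def by auto
          have "2 * (3/2) - 1 * m a1 - 1 * m a2 \<le> (\<Sum>a\<in>R. m a * h a)"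
          proof (rule pw)
            fix a assume aR: "a \<in> R"
            show "2 - (if a = a1 then 1 else 0) - (if a = a2 then 1 else 0) \<le> h a"
              using e1[OF aR] e2[OF aR] True hnn[of a] unfolding h_def by (auto split: if_splits)
          qed
          then show ?thesis using True s2 m1 by simp
        next
          case False
          then have lt: "c2 \<le> c1 - 2" using F1 F2 F3 by linarith
          have "(\<Sum>a\<in>R. m a * (c1 - c2)) \<le> (\<Sum>a\<in>R. m a * h a)"
          proof (rule sum_mono)
            fix a assume aR: "a \<in> R"
            have "real_of_int (c1 - c2) \<le> h a" using lt unfolding h_def by auto
            then show "m a * (c1 - c2) \<le> m a * h a" using nn aR by (intro mult_left_mono) auto
          qed
          then have X: "(3/2) * real_of_int (c1 - c2) \<le> (\<Sum>a\<in>R. m a * h a)" using tot by (simp add: sum_distrib_right[symmetric])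
          have Y: "2 * (3/2 - s) \<le> real_of_int (c1 - c2) * (3/2 - s)" using lt s2 by (intro mult_right_mono) auto
          have Z: "s * real_of_int (c2 - c1) + (3/2) * real_of_int (c1 - c2) = real_of_int (c1 - c2) * (3/2 - s)"
            by (simp add: algebra_simps)
          have "1 \<le> 2 * (3/2 - s)" using s2 by (simp add: algebra_simps)
          also have "\<dots> \<le> real_of_int (c1 - c2) * (3/2 - s)" by (rule Y)
          also have "\<dots> = s * real_of_int (c2 - c1) + (3/2) * real_of_int (c1 - c2)" by (rule Z[symmetric])
          also have "\<dots> \<le> s * real_of_int (c2 - c1) + (\<Sum>a\<in>R. m a * h a)" using X by linarith
          finally show ?thesis .
        qed
      qed
    qed
  qed
  then show ?thesis using D b1 b2 s\<rho>1 s\<rho>2 by (intro exI[of _ \<rho>1] exI[of _ \<rho>2]) auto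
qed

definition feas :: "(int \<times> int \<Rightarrow> real) \<Rightarrow> (int \<times> int \<Rightarrow> real) \<Rightarrow> bool" where
  "feas mu t \<longleftrightarrow> (\<forall>a\<in>supp_seq mu. 0 \<le> t a \<and> t a \<le> mu a) \<and> (\<Sum>a\<in>supp_seq mu. t a) = 1"

lemma feas_lin:
  assumes "feas mu t"
  shows "(\<Sum>a\<in>supp_seq mu. t a * (\<alpha> * (real_of_int (G a) - real_of_int n) + \<beta> * (real_of_int (F a) - real_of_int j)))
    = \<alpha> * ((\<Sum>a\<in>supp_seq mu. t a * real_of_int (G a)) - real_of_int n) + \<beta> * ((\<Sum>a\<in>supp_seq mu. t a * real_of_int (F a)) - real_of_int j)"
proof -
  have s1: "(\<Sum>a\<in>supp_seq mu. t a) = 1" using assms unfolding feas_def by simp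
  have "(\<Sum>a\<in>supp_seq mu. t a * (\<alpha> * (real_of_int (G a) - real_of_int n) + \<beta> * (real_of_int (F a) - real_of_int j)))
     = (\<Sum>a\<in>supp_seq mu. \<alpha> * (t a * real_of_int (G a)) - (\<alpha> * real_of_int n) * t a + \<beta> * (t a * real_of_int (F a)) - (\<beta> * real_of_int j) * t a)"
    by (intro sum.cong) (auto simp: algebra_simps)
  also have "\<dots> = \<alpha> * (\<Sum>a\<in>supp_seq mu. t a * real_of_int (G a)) - (\<alpha> * real_of_int n) * (\<Sum>a\<in>supp_seq mu. t a)
      + \<beta> * (\<Sum>a\<in>supp_seq mu. t a * real_of_int (F a)) - (\<beta> * real_of_int j) * (\<Sum>a\<in>supp_seq mu. t a)"
    by (simp add: sum.distrib sum_subtractf sum_distrib_left)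
  finally show ?thesis using s1 by (simp add: algebra_simps)
qed

locale gf =
  fixes mu :: "int \<times> int \<Rightarrow> real" and F G :: "int \<times> int \<Rightarrow> int"
  assumes nonneg: "\<And>a. 0 \<le> mu a"
    and finS: "finite (supp_seq mu)"
    and half: "\<And>a. mu a \<le> 1/2"
    and total: "(\<Sum>a\<in>supp_seq mu. mu a) = 399/100"
    and inj: "\<And>a b. G a = G b \<Longrightarrow> F a = F b \<Longrightarrow> a = b"
    and lines: "\<And>(\<alpha>::real) \<beta> \<gamma>. \<alpha> \<noteq> 0 \<or> \<beta> \<noteq> 0 \<Longrightarrow>
        (\<Sum>a\<in>{a\<in>supp_seq mu. \<alpha> * real_of_int (G a) + \<beta> * real_of_int (F a) = \<gamma>}. mu a) \<le> 3/2"
    and row0: "(\<Sum>a\<in>{a\<in>supp_seq mu. F a = 0}. mu a) = 3/2"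
begin

lemma pos: "a \<in> supp_seq mu \<Longrightarrow> 0 < mu a"
  using nonneg[of a] unfolding supp_seq_def by auto

lemma finish:
  fixes n j :: int
  assumes f1: "feas mu \<nu>1" and f2: "feas mu \<nu>2" and fu: "feas mu \<nu>u" and fd: "feas mu \<nu>d"
    and F1: "(\<Sum>a\<in>supp_seq mu. \<nu>1 a * real_of_int (F a)) = real_of_int j"
    and F2: "(\<Sum>a\<in>supp_seq mu. \<nu>2 a * real_of_int (F a)) = real_of_int j"
    and G1: "(\<Sum>a\<in>supp_seq mu. \<nu>1 a * real_of_int (G a)) < real_of_int n"
    and G2: "real_of_int n < (\<Sum>a\<in>supp_seq mu. \<nu>2 a * real_of_int (G a))"
    and Fu: "real_of_int j < (\<Sum>a\<in>supp_seq mu. \<nu>u a * real_of_int (F a))"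
    and Fd: "(\<Sum>a\<in>supp_seq mu. \<nu>d a * real_of_int (F a)) < real_of_int j"
  shows "\<forall>\<alpha> \<beta>. \<alpha> \<noteq> 0 \<or> \<beta> \<noteq> 0 \<longrightarrow> (\<exists>t. feas mu t \<and>
     0 < (\<Sum>a\<in>supp_seq mu. t a * (\<alpha> * (real_of_int (G a) - real_of_int n) + \<beta> * (real_of_int (F a) - real_of_int j))))"
proof (intro allI impI)
  fix \<alpha> \<beta> :: real assume ab: "\<alpha> \<noteq> 0 \<or> \<beta> \<noteq> 0"
  show "\<exists>t. feas mu t \<and>
     0 < (\<Sum>a\<in>supp_seq mu. t a * (\<alpha> * (real_of_int (G a) - real_of_int n) + \<beta> * (real_of_int (F a) - real_of_int j)))"
  proof (cases "\<alpha> > 0")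
    case True
    have "0 < \<alpha> * ((\<Sum>a\<in>supp_seq mu. \<nu>2 a * real_of_int (G a)) - real_of_int n)" using True G2 by simp
    then show ?thesis using f2 F2 by (intro exI[of _ \<nu>2]) (simp add: feas_lin)
  next
    case False
    show ?thesis
    proof (cases "\<alpha> < 0")
      case True
      have "0 < \<alpha> * ((\<Sum>a\<in>supp_seq mu. \<nu>1 a * real_of_int (G a)) - real_of_int n)"
        using True G1 by (intro mult_neg_neg) auto
      then show ?thesis using f1 F1 by (intro exI[of _ \<nu>1]) (simp add: feas_lin)
    next
      case False
      then have a0: "\<alpha> = 0" using \<open>\<not> \<alpha> > 0\<close> by simp
      show ?thesis
      proof (cases "\<beta> > 0")
        case True
        have "0 < \<beta> * ((\<Sum>a\<in>supp_seq mu. \<nu>u a * real_of_int (F a)) - real_of_int j)" using True Fu by simp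
        moreover note feas_lin[OF fu, where \<alpha>=\<alpha> and \<beta>=\<beta> and G=G and F=F and n=n and j=j]
        ultimately show ?thesis using fu a0 by (intro exI[of _ \<nu>u]) simp
      next
        case False
        then have "\<beta> < 0" using ab a0 by simp
        then have "0 < \<beta> * ((\<Sum>a\<in>supp_seq mu. \<nu>d a * real_of_int (F a)) - real_of_int j)"
          using Fd by (intro mult_neg_neg) auto
        moreover note feas_lin[OF fd, where \<alpha>=\<alpha> and \<beta>=\<beta> and G=G and F=F and n=n and j=j]
        ultimately show ?thesis using fd a0 by (intro exI[of _ \<nu>d]) simp
      qed
    qed
  qed
qed

lemma scaled:
  assumes T: "T \<subseteq> supp_seq mu" and M: "1 \<le> (\<Sum>a\<in>T. mu a)"
  shows "feas mu (\<lambda>a. if a \<in> T then mu a / (\<Sum>b\<in>T. mu b) else 0)"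
    and "(\<Sum>a\<in>supp_seq mu. (if a \<in> T then mu a / (\<Sum>b\<in>T. mu b) else 0) * f a) = (\<Sum>a\<in>T. mu a * f a) / (\<Sum>b\<in>T. mu b)"
proof -
  let ?M = "(\<Sum>b\<in>T. mu b)"
  have Mp: "0 < ?M" using M by simp
  have ST: "supp_seq mu \<inter> T = T" using T by blast
  have gen: "(\<Sum>a\<in>supp_seq mu. (if a \<in> T then mu a / ?M else 0) * f a) = (\<Sum>a\<in>T. mu a * f a) / ?M" for f
  proof -
    have "(\<Sum>a\<in>supp_seq mu. (if a \<in> T then mu a / ?M else 0) * f a) = (\<Sum>a\<in>supp_seq mu. if a \<in> T then mu a * f a / ?M else 0)"
      by (intro sum.cong) auto
    also have "\<dots> = (\<Sum>a\<in>supp_seq mu \<inter> T. mu a * f a / ?M)" using finS by (simp add: sum.inter_restrict)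
    also have "\<dots> = (\<Sum>a\<in>T. mu a * f a) / ?M" using ST by (simp add: sum_divide_distrib)
    finally show ?thesis .
  qed
  show "(\<Sum>a\<in>supp_seq mu. (if a \<in> T then mu a / ?M else 0) * f a) = (\<Sum>a\<in>T. mu a * f a) / ?M" by (rule gen)
  have "(\<Sum>a\<in>supp_seq mu. (if a \<in> T then mu a / ?M else 0)) = 1"
    using gen[of "\<lambda>_. 1"] Mp by simp
  moreover have "\<forall>a\<in>supp_seq mu. 0 \<le> (if a \<in> T then mu a / ?M else 0) \<and> (if a \<in> T then mu a / ?M else 0) \<le> mu a"
  proof
    fix a assume "a \<in> supp_seq mu"
    have "mu a / ?M \<le> mu a" using M nonneg[of a] by (simp add: divide_le_eq mult_le_cancel_left1)
    then show "0 \<le> (if a \<in> T then mu a / ?M else 0) \<and> (if a \<in> T then mu a / ?M else 0) \<le> mu a"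
      using nonneg[of a] Mp by auto
  qed
  ultimately show "feas mu (\<lambda>a. if a \<in> T then mu a / ?M else 0)" unfolding feas_def by simp
qed

end

context gf begin

lemma slice:
  fixes j :: int
  assumes k0: "\<forall>a\<in>supp_seq mu. F a = 0 \<longrightarrow> \<kappa> a = 0 \<and> d a = 0"
    and k1: "\<forall>a\<in>supp_seq mu. 0 \<le> \<kappa> a - d a \<and> \<kappa> a + d a \<le> mu a \<and> 0 \<le> \<kappa> a + d a \<and> \<kappa> a - d a \<le> mu a"
    and k2: "(\<Sum>a\<in>supp_seq mu. \<kappa> a) \<le> 1/2" "0 \<le> (\<Sum>a\<in>supp_seq mu. \<kappa> a)"
    and k3: "(\<Sum>a\<in>supp_seq mu. \<kappa> a * real_of_int (F a)) = real_of_int j"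
    and k4: "(\<Sum>a\<in>supp_seq mu. d a) = 0" "(\<Sum>a\<in>supp_seq mu. d a * real_of_int (F a)) = 0"
      "0 < (\<Sum>a\<in>supp_seq mu. d a * real_of_int (G a))"
  shows "\<exists>\<nu>1 \<nu>2. feas mu \<nu>1 \<and> feas mu \<nu>2 \<and>
    (\<Sum>a\<in>supp_seq mu. \<nu>1 a * real_of_int (F a)) = real_of_int j \<and>
    (\<Sum>a\<in>supp_seq mu. \<nu>2 a * real_of_int (F a)) = real_of_int j \<and>
    1 < (\<Sum>a\<in>supp_seq mu. \<nu>2 a * real_of_int (G a)) - (\<Sum>a\<in>supp_seq mu. \<nu>1 a * real_of_int (G a))"
proof -
  define R where "R = {a\<in>supp_seq mu. F a = 0}"
  have Rsub: "R \<subseteq> supp_seq mu" unfolding R_def by blast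
  have finR: "finite R" using finS Rsub finite_subset by blast
  have injR: "inj_on G R" unfolding inj_on_def R_def using inj by auto
  have bndR: "\<forall>a\<in>R. 0 \<le> mu a \<and> mu a \<le> 1/2" using nonneg half by auto
  have totR: "(\<Sum>a\<in>R. mu a) = 3/2" using row0 unfolding R_def .
  define \<sigma> where "\<sigma> = (\<Sum>a\<in>supp_seq mu. \<kappa> a)"
  have s1: "1/2 \<le> 1 - \<sigma>" "1 - \<sigma> \<le> 1" using k2 unfolding \<sigma>_def by auto
  obtain \<rho>1 \<rho>2 where \<rho>: "\<forall>a\<in>R. 0 \<le> \<rho>1 a \<and> \<rho>1 a \<le> mu a \<and> 0 \<le> \<rho>2 a \<and> \<rho>2 a \<le> mu a"
    "(\<Sum>a\<in>R. \<rho>1 a) = 1 - \<sigma>" "(\<Sum>a\<in>R. \<rho>2 a) = 1 - \<sigma>"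
    "1 \<le> (\<Sum>a\<in>R. \<rho>2 a * real_of_int (G a)) - (\<Sum>a\<in>R. \<rho>1 a * real_of_int (G a))"
    using greedy_pair[OF finR injR bndR totR s1] by blast
  have SR: "supp_seq mu \<inter> R = R" using Rsub by blast
  have ext: "(\<Sum>a\<in>supp_seq mu. (if a \<in> R then \<rho> a else 0) * f a) = (\<Sum>a\<in>R. \<rho> a * f a)" for \<rho> f :: "int \<times> int \<Rightarrow> real"
  proof -
    have "(\<Sum>a\<in>supp_seq mu. (if a \<in> R then \<rho> a else 0) * f a) = (\<Sum>a\<in>supp_seq mu. if a \<in> R then \<rho> a * f a else 0)"
      by (intro sum.cong) auto
    also have "\<dots> = (\<Sum>a\<in>supp_seq mu \<inter> R. \<rho> a * f a)" using finS by (simp add: sum.inter_restrict)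
    finally show ?thesis using SR by simp
  qed
  have extF: "(\<Sum>a\<in>R. \<rho> a * real_of_int (F a)) = 0" for \<rho>
    by (intro sum.neutral) (auto simp: R_def)
  define \<nu>1 where "\<nu>1 a = (if a \<in> R then \<rho>1 a else 0) + \<kappa> a - d a" for a
  define \<nu>2 where "\<nu>2 a = (if a \<in> R then \<rho>2 a else 0) + \<kappa> a + d a" for a
  have sum1: "(\<Sum>a\<in>supp_seq mu. \<nu>1 a * f a) = (\<Sum>a\<in>R. \<rho>1 a * f a) + (\<Sum>a\<in>supp_seq mu. \<kappa> a * f a) - (\<Sum>a\<in>supp_seq mu. d a * f a)" for f
  proof -
    have "(\<Sum>a\<in>supp_seq mu. \<nu>1 a * f a) = (\<Sum>a\<in>supp_seq mu. (if a \<in> R then \<rho>1 a else 0) * f a + \<kappa> a * f a - d a * f a)"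
      by (intro sum.cong) (auto simp: \<nu>1_def algebra_simps)
    also have "\<dots> = (\<Sum>a\<in>supp_seq mu. (if a \<in> R then \<rho>1 a else 0) * f a) + (\<Sum>a\<in>supp_seq mu. \<kappa> a * f a) - (\<Sum>a\<in>supp_seq mu. d a * f a)"
      by (simp add: sum.distrib sum_subtractf)
    finally show ?thesis using ext by simp
  qed
  have sum2: "(\<Sum>a\<in>supp_seq mu. \<nu>2 a * f a) = (\<Sum>a\<in>R. \<rho>2 a * f a) + (\<Sum>a\<in>supp_seq mu. \<kappa> a * f a) + (\<Sum>a\<in>supp_seq mu. d a * f a)" for f
  proof -
    have "(\<Sum>a\<in>supp_seq mu. \<nu>2 a * f a) = (\<Sum>a\<in>supp_seq mu. (if a \<in> R then \<rho>2 a else 0) * f a + \<kappa> a * f a + d a * f a)"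
      by (intro sum.cong) (auto simp: \<nu>2_def algebra_simps)
    also have "\<dots> = (\<Sum>a\<in>supp_seq mu. (if a \<in> R then \<rho>2 a else 0) * f a) + (\<Sum>a\<in>supp_seq mu. \<kappa> a * f a) + (\<Sum>a\<in>supp_seq mu. d a * f a)"
      by (simp add: sum.distrib)
    finally show ?thesis using ext by simp
  qed
  have b1: "\<forall>a\<in>supp_seq mu. 0 \<le> \<nu>1 a \<and> \<nu>1 a \<le> mu a"
  proof
    fix a assume aS: "a \<in> supp_seq mu"
    show "0 \<le> \<nu>1 a \<and> \<nu>1 a \<le> mu a"
    proof (cases "a \<in> R")
      case True
      then have "F a = 0" unfolding R_def by simp
      then show ?thesis using True \<rho>(1) k0 aS unfolding \<nu>1_def by auto
    next
      case False
      then show ?thesis using k1 aS unfolding \<nu>1_def by auto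
    qed
  qed
  have b2: "\<forall>a\<in>supp_seq mu. 0 \<le> \<nu>2 a \<and> \<nu>2 a \<le> mu a"
  proof
    fix a assume aS: "a \<in> supp_seq mu"
    show "0 \<le> \<nu>2 a \<and> \<nu>2 a \<le> mu a"
    proof (cases "a \<in> R")
      case True
      then have "F a = 0" unfolding R_def by simp
      then show ?thesis using True \<rho>(1) k0 aS unfolding \<nu>2_def by auto
    next
      case False
      then show ?thesis using k1 aS unfolding \<nu>2_def by auto
    qed
  qed
  have "(\<Sum>a\<in>supp_seq mu. \<nu>1 a) = 1" using sum1[of "\<lambda>_. 1"] \<rho>(2) k4(1) unfolding \<sigma>_def by simp
  then have f1: "feas mu \<nu>1" using b1 unfolding feas_def by simp
  have "(\<Sum>a\<in>supp_seq mu. \<nu>2 a) = 1" using sum2[of "\<lambda>_. 1"] \<rho>(3) k4(1) unfolding \<sigma>_def by simp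
  then have f2: "feas mu \<nu>2" using b2 unfolding feas_def by simp
  have F1: "(\<Sum>a\<in>supp_seq mu. \<nu>1 a * real_of_int (F a)) = real_of_int j"
    using sum1[of "\<lambda>a. real_of_int (F a)"] extF k3 k4(2) by simp
  have F2: "(\<Sum>a\<in>supp_seq mu. \<nu>2 a * real_of_int (F a)) = real_of_int j"
    using sum2[of "\<lambda>a. real_of_int (F a)"] extF k3 k4(2) by simp
  have "1 < (\<Sum>a\<in>supp_seq mu. \<nu>2 a * real_of_int (G a)) - (\<Sum>a\<in>supp_seq mu. \<nu>1 a * real_of_int (G a))"
    using sum1[of "\<lambda>a. real_of_int (G a)"] sum2[of "\<lambda>a. real_of_int (G a)"] \<rho>(4) k4(3) by simp
  then show ?thesis using f1 f2 F1 F2 by blast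
qed

lemma perturb:
  assumes slack: "\<forall>a\<in>supp_seq mu. w a \<noteq> 0 \<longrightarrow> 0 < \<kappa> a \<and> \<kappa> a < mu a"
    and w0: "\<forall>a\<in>supp_seq mu. F a = 0 \<longrightarrow> w a = 0"
    and ws: "(\<Sum>a\<in>supp_seq mu. w a) = 0" "(\<Sum>a\<in>supp_seq mu. w a * real_of_int (F a)) = 0"
      "(\<Sum>a\<in>supp_seq mu. w a * real_of_int (G a)) \<noteq> 0"
    and kb: "\<forall>a\<in>supp_seq mu. 0 \<le> \<kappa> a \<and> \<kappa> a \<le> mu a"
  shows "\<exists>d. (\<forall>a\<in>supp_seq mu. F a = 0 \<longrightarrow> d a = 0) \<and>
    (\<forall>a\<in>supp_seq mu. 0 \<le> \<kappa> a - d a \<and> \<kappa> a + d a \<le> mu a \<and> 0 \<le> \<kappa> a + d a \<and> \<kappa> a - d a \<le> mu a) \<and>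
    (\<Sum>a\<in>supp_seq mu. d a) = 0 \<and> (\<Sum>a\<in>supp_seq mu. d a * real_of_int (F a)) = 0 \<and>
    0 < (\<Sum>a\<in>supp_seq mu. d a * real_of_int (G a))"
proof -
  define W where "W = {a\<in>supp_seq mu. w a \<noteq> 0}"
  have finW: "finite W" using finS unfolding W_def by simp
  have "W \<noteq> {}"
  proof
    assume "W = {}"
    then have "\<forall>a\<in>supp_seq mu. w a = 0" unfolding W_def by blast
    then have "(\<Sum>a\<in>supp_seq mu. w a * real_of_int (G a)) = 0" by simp
    then show False using ws(3) by simp
  qed
  define \<phi> where "\<phi> a = min (\<kappa> a) (mu a - \<kappa> a) / \<bar>w a\<bar>" for a
  define \<delta> where "\<delta> = Min (\<phi> ` W)"
  have \<delta>le: "\<And>a. a \<in> W \<Longrightarrow> \<delta> \<le> \<phi> a" unfolding \<delta>_def using finW by simp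
  have "\<delta> \<in> \<phi> ` W" unfolding \<delta>_def using finW \<open>W \<noteq> {}\<close> by simp
  then obtain a0 where a0: "a0 \<in> W" "\<delta> = \<phi> a0" by blast
  have \<delta>pos: "0 < \<delta>" using a0 slack unfolding W_def \<phi>_def by auto
  define c where "c = (if 0 < (\<Sum>a\<in>supp_seq mu. w a * real_of_int (G a)) then \<delta> else - \<delta>)"
  have cabs: "\<bar>c\<bar> = \<delta>" using \<delta>pos unfolding c_def by auto
  define d where "d a = c * w a" for a
  have bd: "\<forall>a\<in>supp_seq mu. 0 \<le> \<kappa> a - d a \<and> \<kappa> a + d a \<le> mu a \<and> 0 \<le> \<kappa> a + d a \<and> \<kappa> a - d a \<le> mu a"
  proof
    fix a assume aS: "a \<in> supp_seq mu"
    show "0 \<le> \<kappa> a - d a \<and> \<kappa> a + d a \<le> mu a \<and> 0 \<le> \<kappa> a + d a \<and> \<kappa> a - d a \<le> mu a"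
    proof (cases "w a = 0")
      case True
      then show ?thesis using kb aS unfolding d_def by auto
    next
      case False
      then have aW: "a \<in> W" unfolding W_def using aS by simp
      have wp: "0 < \<bar>w a\<bar>" using False by simp
      have "\<bar>d a\<bar> = \<delta> * \<bar>w a\<bar>" unfolding d_def using cabs by (simp add: abs_mult)
      also have "\<dots> \<le> \<phi> a * \<bar>w a\<bar>" using \<delta>le[OF aW] wp by (intro mult_right_mono) auto
      also have "\<dots> = min (\<kappa> a) (mu a - \<kappa> a)" unfolding \<phi>_def using wp by simp
      finally have "\<bar>d a\<bar> \<le> min (\<kappa> a) (mu a - \<kappa> a)" .
      then show ?thesis by (auto simp: abs_le_iff)
    qed
  qed
  have "(\<Sum>a\<in>supp_seq mu. d a) = 0" unfolding d_def using ws(1) by (simp add: sum_distrib_left[symmetric])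
  moreover have "(\<Sum>a\<in>supp_seq mu. d a * real_of_int (F a)) = 0" unfolding d_def using ws(2)
    by (simp add: sum_distrib_left[symmetric] mult.assoc)
  moreover have "0 < (\<Sum>a\<in>supp_seq mu. d a * real_of_int (G a))"
  proof -
    have "(\<Sum>a\<in>supp_seq mu. d a * real_of_int (G a)) = c * (\<Sum>a\<in>supp_seq mu. w a * real_of_int (G a))"
      unfolding d_def by (simp add: sum_distrib_left mult.assoc)
    moreover have "0 < c * (\<Sum>a\<in>supp_seq mu. w a * real_of_int (G a))"
    proof (cases "0 < (\<Sum>a\<in>supp_seq mu. w a * real_of_int (G a))")
      case True
      then show ?thesis using \<delta>pos unfolding c_def by simp
    next
      case False
      then have "(\<Sum>a\<in>supp_seq mu. w a * real_of_int (G a)) < 0" using ws(3) by linarith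
      then have "\<delta> * (\<Sum>a\<in>supp_seq mu. w a * real_of_int (G a)) < 0" using \<delta>pos by (rule mult_pos_neg[rotated])
      then show ?thesis using False unfolding c_def by simp
    qed
    ultimately show ?thesis by simp
  qed
  moreover have "\<forall>a\<in>supp_seq mu. F a = 0 \<longrightarrow> d a = 0" using w0 unfolding d_def by simp
  ultimately show ?thesis using bd by blast
qed

end

context gf begin

lemma delta_sums:
  fixes x y z :: real and f :: "int \<times> int \<Rightarrow> real"
  assumes "p \<in> supp_seq mu" "q \<in> supp_seq mu" "r \<in> supp_seq mu"
  shows "(\<Sum>a\<in>supp_seq mu. ((if a = p then x else 0) + (if a = q then y else 0) + (if a = r then z else 0)) * f a)
    = x * f p + y * f q + z * f r"
proof -
  have "(\<Sum>a\<in>supp_seq mu. ((if a = p then x else 0) + (if a = q then y else 0) + (if a = r then z else 0)) * f a)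
      = (\<Sum>a\<in>supp_seq mu. (if a = p then x * f a else 0) + (if a = q then y * f a else 0) + (if a = r then z * f a else 0))"
    by (intro sum.cong) (auto simp: distrib_right)
  also have "\<dots> = x * f p + y * f q + z * f r" using assms finS by (simp add: sum.distrib)
  finally show ?thesis .
qed

lemma triple_w:
  assumes T: "T \<subseteq> supp_seq mu" and big: "3/2 < (\<Sum>a\<in>T. mu a)"
  shows "\<exists>w. (\<forall>a\<in>supp_seq mu. w a \<noteq> 0 \<longrightarrow> a \<in> T) \<and> (\<Sum>a\<in>supp_seq mu. w a) = 0 \<and>
    (\<Sum>a\<in>supp_seq mu. w a * real_of_int (F a)) = 0 \<and> (\<Sum>a\<in>supp_seq mu. w a * real_of_int (G a)) \<noteq> 0"
proof -
  have finT: "finite T" using T finS finite_subset by blast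
  have "T \<noteq> {}" using big by auto
  then obtain p where pT: "p \<in> T" by blast
  obtain q where qT: "q \<in> T" and pq: "q \<noteq> p"
  proof (rule ccontr)
    assume "\<not> thesis"
    then have "\<forall>q\<in>T. q = p" using that by blast
    then have "T = {p}" using pT by blast
    then have "(\<Sum>a\<in>T. mu a) \<le> 1/2" using half[of p] by simp
    then show False using big by simp
  qed
  define \<alpha> where "\<alpha> = real_of_int (F q - F p)"
  define \<beta> where "\<beta> = real_of_int (G p - G q)"
  have ab: "\<alpha> \<noteq> 0 \<or> \<beta> \<noteq> 0" using inj[of p q] pq unfolding \<alpha>_def \<beta>_def by auto
  define \<gamma> where "\<gamma> = \<alpha> * real_of_int (G p) + \<beta> * real_of_int (F p)"
  obtain r where rT: "r \<in> T" and rne: "\<alpha> * real_of_int (G r) + \<beta> * real_of_int (F r) \<noteq> \<gamma>"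
  proof (rule ccontr)
    assume "\<not> thesis"
    then have all: "\<forall>r\<in>T. \<alpha> * real_of_int (G r) + \<beta> * real_of_int (F r) = \<gamma>" using that by blast
    let ?L = "{a\<in>supp_seq mu. \<alpha> * real_of_int (G a) + \<beta> * real_of_int (F a) = \<gamma>}"
    have "T \<subseteq> ?L" using all T by blast
    moreover have "finite ?L" using finS by simp
    ultimately have "(\<Sum>a\<in>T. mu a) \<le> (\<Sum>a\<in>?L. mu a)" using nonneg by (intro sum_mono2) auto
    also have "\<dots> \<le> 3/2" using lines[OF ab] .
    finally show False using big by simp
  qed
  have pS: "p \<in> supp_seq mu" and qS: "q \<in> supp_seq mu" and rS: "r \<in> supp_seq mu" using pT qT rT T by auto
  define w where "w a = (if a = p then real_of_int (F r - F q) else 0) + (if a = q then real_of_int (F p - F r) else 0)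
      + (if a = r then real_of_int (F q - F p) else 0)" for a
  have ws: "(\<Sum>a\<in>supp_seq mu. w a * f a) = real_of_int (F r - F q) * f p + real_of_int (F p - F r) * f q + real_of_int (F q - F p) * f r" for f
    unfolding w_def by (rule delta_sums[OF pS qS rS])
  have "(\<Sum>a\<in>supp_seq mu. w a) = 0" using ws[of "\<lambda>_. 1"] by simp
  moreover have "(\<Sum>a\<in>supp_seq mu. w a * real_of_int (F a)) = 0" using ws[of "\<lambda>a. real_of_int (F a)"] by (simp add: algebra_simps)
  moreover have "(\<Sum>a\<in>supp_seq mu. w a * real_of_int (G a)) \<noteq> 0"
  proof -
    have "(\<Sum>a\<in>supp_seq mu. w a * real_of_int (G a)) = \<alpha> * real_of_int (G r) + \<beta> * real_of_int (F r) - \<gamma>"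
      using ws[of "\<lambda>a. real_of_int (G a)"] unfolding \<alpha>_def \<beta>_def \<gamma>_def by (simp add: algebra_simps)
    then show ?thesis using rne by simp
  qed
  moreover have "\<forall>a\<in>supp_seq mu. w a \<noteq> 0 \<longrightarrow> a \<in> T" using pT qT rT unfolding w_def by auto
  ultimately show ?thesis by blast
qed

lemma pair_w:
  assumes pS: "p \<in> supp_seq mu" and qS: "q \<in> supp_seq mu" and pq: "p \<noteq> q" and Fpq: "F p = F q"
  shows "\<exists>w. (\<forall>a\<in>supp_seq mu. w a \<noteq> 0 \<longrightarrow> a = p \<or> a = q) \<and> (\<Sum>a\<in>supp_seq mu. w a) = 0 \<and>
    (\<Sum>a\<in>supp_seq mu. w a * real_of_int (F a)) = 0 \<and> (\<Sum>a\<in>supp_seq mu. w a * real_of_int (G a)) \<noteq> 0"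
proof -
  define w where "w a = (if a = p then 1 else 0) + (if a = q then -1 else 0) + (if a = q then (0::real) else 0)" for a
  have ws: "(\<Sum>a\<in>supp_seq mu. w a * f a) = 1 * f p + (-1) * f q + 0 * f q" for f
    unfolding w_def by (rule delta_sums[OF pS qS qS])
  have "G p \<noteq> G q" using inj[of p q] pq Fpq by auto
  then have "(\<Sum>a\<in>supp_seq mu. w a * real_of_int (G a)) \<noteq> 0" using ws[of "\<lambda>a. real_of_int (G a)"] by simp
  moreover have "(\<Sum>a\<in>supp_seq mu. w a) = 0" using ws[of "\<lambda>_. 1"] by simp
  moreover have "(\<Sum>a\<in>supp_seq mu. w a * real_of_int (F a)) = 0" using ws[of "\<lambda>a. real_of_int (F a)"] Fpq by simp
  moreover have "\<forall>a\<in>supp_seq mu. w a \<noteq> 0 \<longrightarrow> a = p \<or> a = q" unfolding w_def by auto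
  ultimately show ?thesis by blast
qed

lemma tail:
  fixes j :: int
  assumes kF0: "\<forall>a\<in>supp_seq mu. F a = 0 \<longrightarrow> \<kappa> a = 0"
    and kb: "\<forall>a\<in>supp_seq mu. 0 \<le> \<kappa> a \<and> \<kappa> a \<le> mu a"
    and k2: "(\<Sum>a\<in>supp_seq mu. \<kappa> a) \<le> 1/2" "0 \<le> (\<Sum>a\<in>supp_seq mu. \<kappa> a)"
    and k3: "(\<Sum>a\<in>supp_seq mu. \<kappa> a * real_of_int (F a)) = real_of_int j"
    and slack: "\<forall>a\<in>supp_seq mu. w a \<noteq> 0 \<longrightarrow> 0 < \<kappa> a \<and> \<kappa> a < mu a"
    and w0: "\<forall>a\<in>supp_seq mu. F a = 0 \<longrightarrow> w a = 0"
    and ws: "(\<Sum>a\<in>supp_seq mu. w a) = 0" "(\<Sum>a\<in>supp_seq mu. w a * real_of_int (F a)) = 0"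
      "(\<Sum>a\<in>supp_seq mu. w a * real_of_int (G a)) \<noteq> 0"
    and fu: "feas mu \<nu>u" and fd: "feas mu \<nu>d"
    and Fu: "real_of_int j < (\<Sum>a\<in>supp_seq mu. \<nu>u a * real_of_int (F a))"
    and Fd: "(\<Sum>a\<in>supp_seq mu. \<nu>d a * real_of_int (F a)) < real_of_int j"
  shows "\<exists>n j::int. \<forall>\<alpha> \<beta>. \<alpha> \<noteq> 0 \<or> \<beta> \<noteq> 0 \<longrightarrow> (\<exists>t. feas mu t \<and>
     0 < (\<Sum>a\<in>supp_seq mu. t a * (\<alpha> * (real_of_int (G a) - real_of_int n) + \<beta> * (real_of_int (F a) - real_of_int j))))"
proof -
  obtain d where d: "\<forall>a\<in>supp_seq mu. F a = 0 \<longrightarrow> d a = 0"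
    "\<forall>a\<in>supp_seq mu. 0 \<le> \<kappa> a - d a \<and> \<kappa> a + d a \<le> mu a \<and> 0 \<le> \<kappa> a + d a \<and> \<kappa> a - d a \<le> mu a"
    "(\<Sum>a\<in>supp_seq mu. d a) = 0" "(\<Sum>a\<in>supp_seq mu. d a * real_of_int (F a)) = 0"
    "0 < (\<Sum>a\<in>supp_seq mu. d a * real_of_int (G a))"
    using perturb[OF slack w0 ws kb] by blast
  have k0: "\<forall>a\<in>supp_seq mu. F a = 0 \<longrightarrow> \<kappa> a = 0 \<and> d a = 0" using kF0 d(1) by blast
  obtain \<nu>1 \<nu>2 where \<nu>: "feas mu \<nu>1" "feas mu \<nu>2"
    "(\<Sum>a\<in>supp_seq mu. \<nu>1 a * real_of_int (F a)) = real_of_int j"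
    "(\<Sum>a\<in>supp_seq mu. \<nu>2 a * real_of_int (F a)) = real_of_int j"
    "1 < (\<Sum>a\<in>supp_seq mu. \<nu>2 a * real_of_int (G a)) - (\<Sum>a\<in>supp_seq mu. \<nu>1 a * real_of_int (G a))"
    using slice[OF k0 d(2) k2 k3 d(3) d(4) d(5)] by blast
  define n where "n = \<lfloor>(\<Sum>a\<in>supp_seq mu. \<nu>1 a * real_of_int (G a))\<rfloor> + 1"
  have G1: "(\<Sum>a\<in>supp_seq mu. \<nu>1 a * real_of_int (G a)) < real_of_int n" unfolding n_def by linarith
  have G2: "real_of_int n < (\<Sum>a\<in>supp_seq mu. \<nu>2 a * real_of_int (G a))" using \<nu>(5) unfolding n_def by linarith
  show ?thesis using finish[OF \<nu>(1) \<nu>(2) fu fd \<nu>(3) \<nu>(4) G1 G2 Fu Fd] by blast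
qed

end

context gf begin

lemma sfilt: "(\<Sum>a\<in>supp_seq mu. if P a then g a else 0) = (\<Sum>a\<in>{a\<in>supp_seq mu. P a}. g a)"
  using finS by (simp add: sum.inter_filter)

lemma caseA:
  assumes up: "\<exists>a\<in>supp_seq mu. F a > 0" and dn: "\<exists>a\<in>supp_seq mu. F a < 0"
  shows "\<exists>n j::int. \<forall>\<alpha> \<beta>. \<alpha> \<noteq> 0 \<or> \<beta> \<noteq> 0 \<longrightarrow> (\<exists>t. feas mu t \<and>
     0 < (\<Sum>a\<in>supp_seq mu. t a * (\<alpha> * (real_of_int (G a) - real_of_int n) + \<beta> * (real_of_int (F a) - real_of_int j))))"
proof -
  define Up where "Up = {a\<in>supp_seq mu. F a > 0}"
  define Dn where "Dn = {a\<in>supp_seq mu. F a < 0}"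
  have finUp: "finite Up" "finite Dn" using finS unfolding Up_def Dn_def by auto
  obtain u0 where u0: "u0 \<in> Up" using up unfolding Up_def by blast
  obtain d0 where d0: "d0 \<in> Dn" using dn unfolding Dn_def by blast
  define YU where "YU = (\<Sum>a\<in>Up. mu a * real_of_int (F a))"
  define YD where "YD = (\<Sum>a\<in>Dn. mu a * (- real_of_int (F a)))"
  define mU where "mU = (\<Sum>a\<in>Up. mu a)"
  define mD where "mD = (\<Sum>a\<in>Dn. mu a)"
  have YUpos: "0 < YU"
  proof -
    have "mu u0 * real_of_int (F u0) \<le> YU" unfolding YU_def
      using finUp nonneg u0 by (intro member_le_sum) (auto simp: Up_def)
    moreover have "0 < mu u0 * real_of_int (F u0)" using u0 pos unfolding Up_def by auto
    ultimately show ?thesis by linarith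
  qed
  have YDpos: "0 < YD"
  proof -
    have "mu d0 * (- real_of_int (F d0)) \<le> YD" unfolding YD_def
      using finUp nonneg d0 by (intro member_le_sum) (auto simp: Dn_def intro!: mult_nonneg_nonpos)
    moreover have "0 < mu d0 * (- real_of_int (F d0))" using d0 pos[of d0] unfolding Dn_def by (auto intro!: mult_pos_neg)
    ultimately show ?thesis by linarith
  qed
  have mUY: "mU \<le> YU" unfolding mU_def YU_def
  proof (rule sum_mono)
    fix a assume "a \<in> Up"
    then have "1 \<le> real_of_int (F a)" unfolding Up_def by simp
    then show "mu a \<le> mu a * real_of_int (F a)" using nonneg[of a] by (simp add: mult_le_cancel_left1)
  qed
  have mDY: "mD \<le> YD" unfolding mD_def YD_def
  proof (rule sum_mono)
    fix a assume "a \<in> Dn"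
    then have "1 \<le> - real_of_int (F a)" unfolding Dn_def by simp
    then show "mu a \<le> mu a * (- real_of_int (F a))" using nonneg[of a] mult_left_mono[of 1 "- real_of_int (F a)" "mu a"] by simp
  qed
  have mUn: "0 \<le> mU" "0 \<le> mD" unfolding mU_def mD_def using nonneg by (auto intro: sum_nonneg)
  define \<epsilon> where "\<epsilon> = min (1/4) (min (YU/2) (YD/2))"
  have \<epsilon>: "0 < \<epsilon>" "\<epsilon> \<le> 1/4" "\<epsilon> \<le> YU/2" "\<epsilon> \<le> YD/2" using YUpos YDpos unfolding \<epsilon>_def by auto
  define \<theta>U where "\<theta>U = \<epsilon> / YU"
  define \<theta>D where "\<theta>D = \<epsilon> / YD"
  define \<kappa> where "\<kappa> a = (if F a > 0 then \<theta>U * mu a else if F a < 0 then \<theta>D * mu a else 0)" for a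
  have ksum: "(\<Sum>a\<in>supp_seq mu. \<kappa> a * f a) = \<theta>U * (\<Sum>a\<in>Up. mu a * f a) + \<theta>D * (\<Sum>a\<in>Dn. mu a * f a)" for f
  proof -
    have "(\<Sum>a\<in>supp_seq mu. \<kappa> a * f a) = (\<Sum>a\<in>supp_seq mu. (if F a > 0 then \<theta>U * (mu a * f a) else 0)
        + (if F a < 0 then \<theta>D * (mu a * f a) else 0))"
      by (intro sum.cong) (auto simp: \<kappa>_def)
    also have "\<dots> = (\<Sum>a\<in>Up. \<theta>U * (mu a * f a)) + (\<Sum>a\<in>Dn. \<theta>D * (mu a * f a))"
      unfolding Up_def Dn_def by (simp add: sum.distrib sfilt)
    finally show ?thesis by (simp add: sum_distrib_left)
  qed
  have th: "0 < \<theta>U" "\<theta>U \<le> 1/2" "0 < \<theta>D" "\<theta>D \<le> 1/2"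
    using \<epsilon> YUpos YDpos unfolding \<theta>U_def \<theta>D_def by (auto simp: divide_le_eq)
  have ks: "(\<Sum>a\<in>supp_seq mu. \<kappa> a) = \<theta>U * mU + \<theta>D * mD"
    using ksum[of "\<lambda>_. 1"] unfolding mU_def mD_def by simp
  have k2a: "(\<Sum>a\<in>supp_seq mu. \<kappa> a) \<le> 1/2"
  proof -
    have "\<theta>U * mU \<le> \<theta>U * YU" using mUY th by (intro mult_left_mono) auto
    also have "\<dots> = \<epsilon>" unfolding \<theta>U_def using YUpos by simp
    finally have 1: "\<theta>U * mU \<le> \<epsilon>" .
    have "\<theta>D * mD \<le> \<theta>D * YD" using mDY th by (intro mult_left_mono) auto
    also have "\<dots> = \<epsilon>" unfolding \<theta>D_def using YDpos by simp
    finally have 2: "\<theta>D * mD \<le> \<epsilon>" .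
    show ?thesis using 1 2 ks \<epsilon> by linarith
  qed
  have k2b: "0 \<le> (\<Sum>a\<in>supp_seq mu. \<kappa> a)"
  proof -
    have "0 \<le> \<theta>U * mU" using th mUn by (intro mult_nonneg_nonneg) auto
    moreover have "0 \<le> \<theta>D * mD" using th mUn by (intro mult_nonneg_nonneg) auto
    ultimately show ?thesis using ks by linarith
  qed
  have k3: "(\<Sum>a\<in>supp_seq mu. \<kappa> a * real_of_int (F a)) = real_of_int 0"
  proof -
    have "(\<Sum>a\<in>Dn. mu a * real_of_int (F a)) = - YD" unfolding YD_def by (simp add: sum_negf)
    then show ?thesis using ksum[of "\<lambda>a. real_of_int (F a)"] YUpos YDpos unfolding YU_def[symmetric] \<theta>U_def \<theta>D_def by simp
  qed
  have kF0: "\<forall>a\<in>supp_seq mu. F a = 0 \<longrightarrow> \<kappa> a = 0" unfolding \<kappa>_def by simp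
  have kb: "\<forall>a\<in>supp_seq mu. 0 \<le> \<kappa> a \<and> \<kappa> a \<le> mu a"
  proof
    fix a assume "a \<in> supp_seq mu"
    have "\<theta>U * mu a \<le> mu a" using th nonneg[of a] by (intro mult_left_le_one_le) auto
    moreover have "\<theta>D * mu a \<le> mu a" using th nonneg[of a] by (intro mult_left_le_one_le) auto
    ultimately show "0 \<le> \<kappa> a \<and> \<kappa> a \<le> mu a" using th nonneg[of a] unfolding \<kappa>_def by auto
  qed
  define T where "T = {a\<in>supp_seq mu. F a \<noteq> 0}"
  have TS: "T \<subseteq> supp_seq mu" unfolding T_def by blast
  have bigT: "3/2 < (\<Sum>a\<in>T. mu a)"
  proof -
    have "(\<Sum>a\<in>supp_seq mu. mu a) = (\<Sum>a\<in>supp_seq mu. (if F a = 0 then mu a else 0) + (if F a \<noteq> 0 then mu a else 0))"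
      by (intro sum.cong) auto
    also have "\<dots> = 3/2 + (\<Sum>a\<in>T. mu a)" using row0 unfolding T_def by (simp add: sum.distrib sfilt)
    finally show ?thesis using total by simp
  qed
  obtain w where w: "\<forall>a\<in>supp_seq mu. w a \<noteq> 0 \<longrightarrow> a \<in> T" "(\<Sum>a\<in>supp_seq mu. w a) = 0"
    "(\<Sum>a\<in>supp_seq mu. w a * real_of_int (F a)) = 0" "(\<Sum>a\<in>supp_seq mu. w a * real_of_int (G a)) \<noteq> 0"
    using triple_w[OF TS bigT] by blast
  have slack: "\<forall>a\<in>supp_seq mu. w a \<noteq> 0 \<longrightarrow> 0 < \<kappa> a \<and> \<kappa> a < mu a"
  proof (intro ballI impI)
    fix a assume aS: "a \<in> supp_seq mu" and "w a \<noteq> 0"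
    then have "F a \<noteq> 0" using w(1) unfolding T_def by auto
    moreover have "0 < mu a" using pos aS by simp
    moreover have "\<theta>U * mu a < mu a" "\<theta>D * mu a < mu a" using th \<open>0 < mu a\<close> by auto
    ultimately show "0 < \<kappa> a \<and> \<kappa> a < mu a" using th unfolding \<kappa>_def by auto
  qed
  have w0: "\<forall>a\<in>supp_seq mu. F a = 0 \<longrightarrow> w a = 0" using w(1) unfolding T_def by auto
  define Tu where "Tu = {a\<in>supp_seq mu. F a \<ge> 0}"
  define Td where "Td = {a\<in>supp_seq mu. F a \<le> 0}"
  have TuS: "Tu \<subseteq> supp_seq mu" "Td \<subseteq> supp_seq mu" unfolding Tu_def Td_def by auto
  have finTu: "finite Tu" "finite Td" using finS unfolding Tu_def Td_def by auto
  have "(\<Sum>a\<in>{a\<in>supp_seq mu. F a = 0}. mu a) \<le> (\<Sum>a\<in>Tu. mu a)"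
    by (rule sum_mono2) (use finTu nonneg in \<open>auto simp: Tu_def\<close>)
  then have Mu: "3/2 \<le> (\<Sum>a\<in>Tu. mu a)" using row0 by simp
  have "(\<Sum>a\<in>{a\<in>supp_seq mu. F a = 0}. mu a) \<le> (\<Sum>a\<in>Td. mu a)"
    by (rule sum_mono2) (use finTu nonneg in \<open>auto simp: Td_def\<close>)
  then have Md: "3/2 \<le> (\<Sum>a\<in>Td. mu a)" using row0 by simp
  have Mu1: "1 \<le> (\<Sum>a\<in>Tu. mu a)" "1 \<le> (\<Sum>a\<in>Td. mu a)" using Mu Md by auto
  note su = scaled[OF TuS(1) Mu1(1)] and sd = scaled[OF TuS(2) Mu1(2)]
  have Fu: "real_of_int 0 < (\<Sum>a\<in>supp_seq mu. (if a \<in> Tu then mu a / (\<Sum>b\<in>Tu. mu b) else 0) * real_of_int (F a))"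
  proof -
    have "u0 \<in> Tu" using u0 unfolding Up_def Tu_def by auto
    then have "mu u0 * real_of_int (F u0) \<le> (\<Sum>a\<in>Tu. mu a * real_of_int (F a))"
      using finTu nonneg by (intro member_le_sum) (auto simp: Tu_def)
    moreover have "0 < mu u0 * real_of_int (F u0)" using u0 pos unfolding Up_def by auto
    ultimately have "0 < (\<Sum>a\<in>Tu. mu a * real_of_int (F a))" by linarith
    then show ?thesis using su(2)[of "\<lambda>a. real_of_int (F a)"] Mu by simp
  qed
  have Fd: "(\<Sum>a\<in>supp_seq mu. (if a \<in> Td then mu a / (\<Sum>b\<in>Td. mu b) else 0) * real_of_int (F a)) < real_of_int 0"
  proof -
    have "d0 \<in> Td" using d0 unfolding Dn_def Td_def by auto
    then have "mu d0 * (- real_of_int (F d0)) \<le> (\<Sum>a\<in>Td. mu a * (- real_of_int (F a)))"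
      using finTu nonneg by (intro member_le_sum) (auto simp: Td_def intro!: mult_nonneg_nonpos)
    moreover have "0 < mu d0 * (- real_of_int (F d0))" using d0 pos[of d0] unfolding Dn_def by (auto intro!: mult_pos_neg)
    ultimately have "(\<Sum>a\<in>Td. mu a * real_of_int (F a)) < 0" by (simp add: sum_negf)
    then show ?thesis using sd(2)[of "\<lambda>a. real_of_int (F a)"] Md by (simp add: divide_neg_pos)
  qed
  show ?thesis using tail[OF kF0 kb k2a k2b k3 slack w0 w(2) w(3) w(4) su(1) sd(1) Fu Fd] .
qed

end

context gf begin

lemma two_points:
  assumes "B \<subseteq> supp_seq mu" "1/2 < (\<Sum>a\<in>B. mu a)"
  shows "\<exists>p\<in>B. \<exists>q\<in>B. p \<noteq> q"
proof -
  have "B \<noteq> {}" using assms(2) by auto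
  then obtain p where pB: "p \<in> B" by blast
  show ?thesis
  proof (rule ccontr)
    assume "\<not> ?thesis"
    then have "B = {p}" using pB by blast
    then show False using assms(2) half[of p] by simp
  qed
qed

lemma caseB:
  assumes nnF: "\<forall>a\<in>supp_seq mu. 0 \<le> F a"
  shows "\<exists>n j::int. \<forall>\<alpha> \<beta>. \<alpha> \<noteq> 0 \<or> \<beta> \<noteq> 0 \<longrightarrow> (\<exists>t. feas mu t \<and>
     0 < (\<Sum>a\<in>supp_seq mu. t a * (\<alpha> * (real_of_int (G a) - real_of_int n) + \<beta> * (real_of_int (F a) - real_of_int j))))"
proof -
  define R0 where "R0 = {a\<in>supp_seq mu. F a = 0}"
  define R1 where "R1 = {a\<in>supp_seq mu. F a = 1}"
  define B2 where "B2 = {a\<in>supp_seq mu. 2 \<le> F a}"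
  define T1 where "T1 = {a\<in>supp_seq mu. 1 \<le> F a}"
  have subs: "R0 \<subseteq> supp_seq mu" "R1 \<subseteq> supp_seq mu" "B2 \<subseteq> supp_seq mu" "T1 \<subseteq> supp_seq mu"
    unfolding R0_def R1_def B2_def T1_def by auto
  have fins: "finite R1" "finite B2" "finite T1" using finS unfolding R1_def B2_def T1_def by auto
  define m1 where "m1 = (\<Sum>a\<in>R1. mu a)"
  define m2 where "m2 = (\<Sum>a\<in>B2. mu a)"
  define Y1 where "Y1 = (\<Sum>a\<in>B2. mu a * real_of_int (F a))"
  have m1n: "0 \<le> m1" unfolding m1_def using nonneg by (auto intro: sum_nonneg)
  have m1le: "m1 \<le> 3/2"
  proof -
    have "{a\<in>supp_seq mu. 0 * real_of_int (G a) + 1 * real_of_int (F a) = 1} = R1" unfolding R1_def by auto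
    then show ?thesis using lines[of 0 1 1] unfolding m1_def by simp
  qed
  have split: "(\<Sum>a\<in>supp_seq mu. mu a * f a) = (\<Sum>a\<in>R0. mu a * f a) + (\<Sum>a\<in>R1. mu a * f a) + (\<Sum>a\<in>B2. mu a * f a)" for f
  proof -
    have "(\<Sum>a\<in>supp_seq mu. mu a * f a) = (\<Sum>a\<in>supp_seq mu. (if F a = 0 then mu a * f a else 0)
      + (if F a = 1 then mu a * f a else 0) + (if 2 \<le> F a then mu a * f a else 0))"
    proof (intro sum.cong refl)
      fix a assume "a \<in> supp_seq mu"
      then have "0 \<le> F a" using nnF by blast
      then show "mu a * f a = (if F a = 0 then mu a * f a else 0) + (if F a = 1 then mu a * f a else 0) + (if 2 \<le> F a then mu a * f a else 0)"
        by auto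
    qed
    also have "\<dots> = (\<Sum>a\<in>R0. mu a * f a) + (\<Sum>a\<in>R1. mu a * f a) + (\<Sum>a\<in>B2. mu a * f a)"
      unfolding R0_def R1_def B2_def by (simp add: sum.distrib sfilt)
    finally show ?thesis .
  qed
  have splitT: "(\<Sum>a\<in>T1. mu a * f a) = (\<Sum>a\<in>R1. mu a * f a) + (\<Sum>a\<in>B2. mu a * f a)" for f
  proof -
    have "(\<Sum>a\<in>T1. mu a * f a) = (\<Sum>a\<in>supp_seq mu. if 1 \<le> F a then mu a * f a else 0)" unfolding T1_def by (simp add: sfilt)
    also have "\<dots> = (\<Sum>a\<in>supp_seq mu. (if F a = 1 then mu a * f a else 0) + (if 2 \<le> F a then mu a * f a else 0))"
      by (intro sum.cong) auto
    also have "\<dots> = (\<Sum>a\<in>R1. mu a * f a) + (\<Sum>a\<in>B2. mu a * f a)"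
      unfolding R1_def B2_def by (simp add: sum.distrib sfilt)
    finally show ?thesis .
  qed
  have "399/100 = 3/2 + m1 + m2" using split[of "\<lambda>_. 1"] total row0 unfolding R0_def m1_def m2_def by simp
  then have m2v: "m2 = 249/100 - m1" by simp
  then have m2ge: "99/100 \<le> m2" using m1le by simp
  have mT1: "(\<Sum>a\<in>T1. mu a) = 249/100" using splitT[of "\<lambda>_. 1"] m2v unfolding m1_def m2_def by simp
  have Y1ge: "2 * m2 \<le> Y1" unfolding m2_def Y1_def sum_distrib_left
  proof (rule sum_mono)
    fix a assume "a \<in> B2"
    then have "2 \<le> real_of_int (F a)" unfolding B2_def by simp
    then show "2 * mu a \<le> mu a * real_of_int (F a)" using nonneg[of a] by (simp add: mult.commute mult_left_mono)
  qed
  have R1F: "(\<Sum>a\<in>R1. mu a * real_of_int (F a)) = m1" unfolding m1_def R1_def by (intro sum.cong) auto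
  have "\<exists>\<kappa> w. (\<forall>a\<in>supp_seq mu. F a = 0 \<longrightarrow> \<kappa> a = 0) \<and> (\<forall>a\<in>supp_seq mu. 0 \<le> \<kappa> a \<and> \<kappa> a \<le> mu a) \<and>
     (\<Sum>a\<in>supp_seq mu. \<kappa> a) \<le> 1/2 \<and> 0 \<le> (\<Sum>a\<in>supp_seq mu. \<kappa> a) \<and>
     (\<Sum>a\<in>supp_seq mu. \<kappa> a * real_of_int (F a)) = real_of_int 1 \<and>
     (\<forall>a\<in>supp_seq mu. w a \<noteq> 0 \<longrightarrow> 0 < \<kappa> a \<and> \<kappa> a < mu a) \<and>
     (\<forall>a\<in>supp_seq mu. F a = 0 \<longrightarrow> w a = 0) \<and>
     (\<Sum>a\<in>supp_seq mu. w a) = 0 \<and> (\<Sum>a\<in>supp_seq mu. w a * real_of_int (F a)) = 0 \<and>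
     (\<Sum>a\<in>supp_seq mu. w a * real_of_int (G a)) \<noteq> 0"
  proof (cases "2 * m2 < Y1")
    case True
    have Y1p: "0 < Y1" "1 < Y1" using Y1ge m2ge by auto
    define \<rho> where "\<rho> = m2 / Y1"
    have \<rho>: "0 \<le> \<rho>" "\<rho> < 1/2" using True m2ge Y1p unfolding \<rho>_def by (auto simp: divide_less_eq)
    define \<theta>2 where "\<theta>2 = (1/2 - \<rho>) / (m1 + 1)"
    have \<theta>2: "0 < \<theta>2" "\<theta>2 \<le> 1/2" using \<rho> m1n unfolding \<theta>2_def by (auto simp: divide_le_eq)
    have \<theta>2m: "\<theta>2 * (m1 + 1) = 1/2 - \<rho>" unfolding \<theta>2_def using m1n by simp
    have \<theta>2m1: "\<theta>2 * m1 \<le> 3/4"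
    proof -
      have "\<theta>2 * m1 \<le> (1/2) * (3/2)" using \<theta>2 m1n m1le by (intro mult_mono) auto
      then show ?thesis by simp
    qed
    define \<theta>1 where "\<theta>1 = (1 - \<theta>2 * m1) / Y1"
    have \<theta>2m1n: "0 \<le> \<theta>2 * m1" using \<theta>2 m1n by simp
    have \<theta>1: "0 < \<theta>1" "\<theta>1 < 1" using \<theta>2m1 Y1p \<theta>2m1n unfolding \<theta>1_def
      by (auto simp: divide_less_eq intro!: divide_pos_pos)
    have \<theta>1Y: "\<theta>1 * Y1 = 1 - \<theta>2 * m1" unfolding \<theta>1_def using Y1p by simp
    have \<theta>1m: "\<theta>1 * m2 = (1 - \<theta>2 * m1) * \<rho>" unfolding \<theta>1_def \<rho>_def by simp
    define \<kappa> where "\<kappa> a = (if 2 \<le> F a then \<theta>1 * mu a else if F a = 1 then \<theta>2 * mu a else 0)" for a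
    have ksum: "(\<Sum>a\<in>supp_seq mu. \<kappa> a * f a) = \<theta>1 * (\<Sum>a\<in>B2. mu a * f a) + \<theta>2 * (\<Sum>a\<in>R1. mu a * f a)" for f
    proof -
      have "(\<Sum>a\<in>supp_seq mu. \<kappa> a * f a) = (\<Sum>a\<in>supp_seq mu. (if 2 \<le> F a then \<theta>1 * (mu a * f a) else 0)
          + (if F a = 1 then \<theta>2 * (mu a * f a) else 0))"
        by (intro sum.cong) (auto simp: \<kappa>_def)
      also have "\<dots> = (\<Sum>a\<in>B2. \<theta>1 * (mu a * f a)) + (\<Sum>a\<in>R1. \<theta>2 * (mu a * f a))"
        unfolding B2_def R1_def by (simp add: sum.distrib sfilt)
      finally show ?thesis by (simp add: sum_distrib_left)
    qed
    have ks: "(\<Sum>a\<in>supp_seq mu. \<kappa> a) = \<theta>1 * m2 + \<theta>2 * m1" using ksum[of "\<lambda>_. 1"] unfolding m1_def m2_def by simp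
    have kF: "(\<Sum>a\<in>supp_seq mu. \<kappa> a * real_of_int (F a)) = real_of_int 1"
      using ksum[of "\<lambda>a. real_of_int (F a)"] R1F \<theta>1Y unfolding Y1_def[symmetric] by simp
    have k2a: "(\<Sum>a\<in>supp_seq mu. \<kappa> a) \<le> 1/2"
    proof -
      have "\<theta>2 * m1 * (1 - \<rho>) \<le> \<theta>2 * m1" using \<theta>2 m1n \<rho> by (intro mult_right_le_one_le) auto
      also have "\<dots> \<le> \<theta>2 * (m1 + 1)" using \<theta>2 by simp
      finally have "\<theta>2 * m1 * (1 - \<rho>) \<le> 1/2 - \<rho>" using \<theta>2m by simp
      moreover have "\<theta>1 * m2 + \<theta>2 * m1 = \<rho> + \<theta>2 * m1 * (1 - \<rho>)" using \<theta>1m by (simp add: algebra_simps)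
      ultimately show ?thesis using ks by simp
    qed
    have k2b: "0 \<le> (\<Sum>a\<in>supp_seq mu. \<kappa> a)"
    proof -
      have "0 \<le> \<theta>1 * m2" using \<theta>1 m2ge by (intro mult_nonneg_nonneg) auto
      moreover have "0 \<le> \<theta>2 * m1" using \<theta>2 m1n by (intro mult_nonneg_nonneg) auto
      ultimately show ?thesis using ks by linarith
    qed
    have kF0: "\<forall>a\<in>supp_seq mu. F a = 0 \<longrightarrow> \<kappa> a = 0" unfolding \<kappa>_def by simp
    have kb: "\<forall>a\<in>supp_seq mu. 0 \<le> \<kappa> a \<and> \<kappa> a \<le> mu a"
    proof
      fix a assume "a \<in> supp_seq mu"
      have "\<theta>1 * mu a \<le> mu a" using \<theta>1 nonneg[of a] by (intro mult_left_le_one_le) auto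
      moreover have "\<theta>2 * mu a \<le> mu a" using \<theta>2 nonneg[of a] by (intro mult_left_le_one_le) auto
      ultimately show "0 \<le> \<kappa> a \<and> \<kappa> a \<le> mu a" using \<theta>1 \<theta>2 nonneg[of a] unfolding \<kappa>_def by auto
    qed
    have bigT: "3/2 < (\<Sum>a\<in>T1. mu a)" using mT1 by simp
    obtain w where w: "\<forall>a\<in>supp_seq mu. w a \<noteq> 0 \<longrightarrow> a \<in> T1" "(\<Sum>a\<in>supp_seq mu. w a) = 0"
      "(\<Sum>a\<in>supp_seq mu. w a * real_of_int (F a)) = 0" "(\<Sum>a\<in>supp_seq mu. w a * real_of_int (G a)) \<noteq> 0"
      using triple_w[OF subs(4) bigT] by blast
    have slack: "\<forall>a\<in>supp_seq mu. w a \<noteq> 0 \<longrightarrow> 0 < \<kappa> a \<and> \<kappa> a < mu a"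
    proof (intro ballI impI)
      fix a assume aS: "a \<in> supp_seq mu" and "w a \<noteq> 0"
      then have "1 \<le> F a" using w(1) unfolding T1_def by auto
      moreover have mp: "0 < mu a" using pos aS by simp
      moreover have "\<theta>1 * mu a < mu a" "\<theta>2 * mu a < mu a" using \<theta>1 \<theta>2 mp by auto
      ultimately show "0 < \<kappa> a \<and> \<kappa> a < mu a" using \<theta>1 \<theta>2 unfolding \<kappa>_def by auto
    qed
    have w0: "\<forall>a\<in>supp_seq mu. F a = 0 \<longrightarrow> w a = 0" using w(1) unfolding T1_def by auto
    show ?thesis using kF0 kb k2a k2b kF slack w0 w(2-4) by blast
  next
    case False
    then have Yeq: "Y1 = 2 * m2" using Y1ge by simp
    have allF2: "\<forall>a\<in>B2. F a = 2"
    proof -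
      have "(\<Sum>a\<in>B2. mu a * (real_of_int (F a) - 2)) = (\<Sum>a\<in>B2. mu a * real_of_int (F a)) - (\<Sum>a\<in>B2. 2 * mu a)"
        by (simp add: sum_subtractf right_diff_distrib mult.commute)
      also have "(\<Sum>a\<in>B2. 2 * mu a) = 2 * m2" unfolding m2_def by (simp add: sum_distrib_left)
      finally have z: "(\<Sum>a\<in>B2. mu a * (real_of_int (F a) - 2)) = 0" using Yeq unfolding Y1_def by simp
      have nn: "\<forall>a\<in>B2. 0 \<le> mu a * (real_of_int (F a) - 2)"
      proof
        fix a assume "a \<in> B2"
        then have "0 \<le> real_of_int (F a) - 2" unfolding B2_def by simp
        then show "0 \<le> mu a * (real_of_int (F a) - 2)" using nonneg[of a] by (rule mult_nonneg_nonneg[rotated])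
      qed
      have iff: "(\<Sum>a\<in>B2. mu a * (real_of_int (F a) - 2)) = 0 \<longleftrightarrow> (\<forall>a\<in>B2. mu a * (real_of_int (F a) - 2) = 0)"
        by (rule sum_nonneg_eq_0_iff[OF fins(2)]) (use nn in blast)
      have z2: "\<forall>a\<in>B2. mu a * (real_of_int (F a) - 2) = 0" using iff z by (rule iffD1)
      show ?thesis
      proof
        fix a assume aB: "a \<in> B2"
        then have "0 < mu a" using pos subs(3) by blast
        moreover have "mu a * (real_of_int (F a) - 2) = 0" using z2 aB by blast
        ultimately have "real_of_int (F a) - 2 = 0" by simp
        then show "F a = 2" by simp
      qed
    qed
    define \<theta> where "\<theta> = 1 / (2 * m2)"
    have \<theta>: "0 < \<theta>" "\<theta> < 1" using m2ge unfolding \<theta>_def by auto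
    define \<kappa> where "\<kappa> a = (if 2 \<le> F a then \<theta> * mu a else 0)" for a
    have ksum: "(\<Sum>a\<in>supp_seq mu. \<kappa> a * f a) = \<theta> * (\<Sum>a\<in>B2. mu a * f a)" for f
    proof -
      have "(\<Sum>a\<in>supp_seq mu. \<kappa> a * f a) = (\<Sum>a\<in>supp_seq mu. if 2 \<le> F a then \<theta> * (mu a * f a) else 0)"
        by (intro sum.cong) (auto simp: \<kappa>_def)
      also have "\<dots> = (\<Sum>a\<in>B2. \<theta> * (mu a * f a))" unfolding B2_def by (simp add: sfilt)
      finally show ?thesis by (simp add: sum_distrib_left)
    qed
    have "(\<Sum>a\<in>supp_seq mu. \<kappa> a) = \<theta> * m2" using ksum[of "\<lambda>_. 1"] unfolding m2_def by simp
    then have ks: "(\<Sum>a\<in>supp_seq mu. \<kappa> a) = 1/2" using m2ge unfolding \<theta>_def by simp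
    have "(\<Sum>a\<in>supp_seq mu. \<kappa> a * real_of_int (F a)) = \<theta> * Y1" using ksum[of "\<lambda>a. real_of_int (F a)"] unfolding Y1_def by simp
    then have kF: "(\<Sum>a\<in>supp_seq mu. \<kappa> a * real_of_int (F a)) = real_of_int 1" using Yeq m2ge unfolding \<theta>_def by simp
    have kF0: "\<forall>a\<in>supp_seq mu. F a = 0 \<longrightarrow> \<kappa> a = 0" unfolding \<kappa>_def by simp
    have kb: "\<forall>a\<in>supp_seq mu. 0 \<le> \<kappa> a \<and> \<kappa> a \<le> mu a"
    proof
      fix a assume "a \<in> supp_seq mu"
      have "\<theta> * mu a \<le> mu a" using \<theta> nonneg[of a] by (intro mult_left_le_one_le) auto
      then show "0 \<le> \<kappa> a \<and> \<kappa> a \<le> mu a" using \<theta> nonneg[of a] unfolding \<kappa>_def by auto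
    qed
    have "1/2 < (\<Sum>a\<in>B2. mu a)" using m2ge unfolding m2_def by simp
    then obtain p q where pq: "p \<in> B2" "q \<in> B2" "p \<noteq> q" using two_points[OF subs(3)] by blast
    have Fpq: "F p = F q" using allF2 pq by simp
    have pS: "p \<in> supp_seq mu" "q \<in> supp_seq mu" using pq subs(3) by auto
    obtain w where w: "\<forall>a\<in>supp_seq mu. w a \<noteq> 0 \<longrightarrow> a = p \<or> a = q" "(\<Sum>a\<in>supp_seq mu. w a) = 0"
      "(\<Sum>a\<in>supp_seq mu. w a * real_of_int (F a)) = 0" "(\<Sum>a\<in>supp_seq mu. w a * real_of_int (G a)) \<noteq> 0"
      using pair_w[OF pS(1) pS(2) pq(3) Fpq] by blast
    have slack: "\<forall>a\<in>supp_seq mu. w a \<noteq> 0 \<longrightarrow> 0 < \<kappa> a \<and> \<kappa> a < mu a"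
    proof (intro ballI impI)
      fix a assume aS: "a \<in> supp_seq mu" and "w a \<noteq> 0"
      then have "a \<in> B2" using w(1) pq by auto
      then have "2 \<le> F a" unfolding B2_def by simp
      moreover have mp: "0 < mu a" using pos aS by simp
      moreover have "\<theta> * mu a < mu a" using \<theta> mp by auto
      ultimately show "0 < \<kappa> a \<and> \<kappa> a < mu a" using \<theta> unfolding \<kappa>_def by auto
    qed
    have w0: "\<forall>a\<in>supp_seq mu. F a = 0 \<longrightarrow> w a = 0"
      using w(1) pq allF2 by force
    show ?thesis using kF0 kb ks kF slack w0 w(2-4) by (intro exI[of _ \<kappa>] exI[of _ w]) simp
  qed
  then obtain \<kappa> w where kw: "\<forall>a\<in>supp_seq mu. F a = 0 \<longrightarrow> \<kappa> a = 0" "\<forall>a\<in>supp_seq mu. 0 \<le> \<kappa> a \<and> \<kappa> a \<le> mu a"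
     "(\<Sum>a\<in>supp_seq mu. \<kappa> a) \<le> 1/2" "0 \<le> (\<Sum>a\<in>supp_seq mu. \<kappa> a)"
     "(\<Sum>a\<in>supp_seq mu. \<kappa> a * real_of_int (F a)) = real_of_int 1"
     "\<forall>a\<in>supp_seq mu. w a \<noteq> 0 \<longrightarrow> 0 < \<kappa> a \<and> \<kappa> a < mu a"
     "\<forall>a\<in>supp_seq mu. F a = 0 \<longrightarrow> w a = 0"
     "(\<Sum>a\<in>supp_seq mu. w a) = 0" "(\<Sum>a\<in>supp_seq mu. w a * real_of_int (F a)) = 0"
     "(\<Sum>a\<in>supp_seq mu. w a * real_of_int (G a)) \<noteq> 0" by blast
  have M0: "1 \<le> (\<Sum>a\<in>R0. mu a)" using row0 unfolding R0_def by simp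
  have MT: "1 \<le> (\<Sum>a\<in>T1. mu a)" using mT1 by simp
  note sd = scaled[OF subs(1) M0] and su = scaled[OF subs(4) MT]
  have Fd: "(\<Sum>a\<in>supp_seq mu. (if a \<in> R0 then mu a / (\<Sum>b\<in>R0. mu b) else 0) * real_of_int (F a)) < real_of_int 1"
  proof -
    have "(\<Sum>a\<in>R0. mu a * real_of_int (F a)) = 0" unfolding R0_def by (intro sum.neutral) auto
    then show ?thesis using sd(2)[of "\<lambda>a. real_of_int (F a)"] by simp
  qed
  have Fu: "real_of_int 1 < (\<Sum>a\<in>supp_seq mu. (if a \<in> T1 then mu a / (\<Sum>b\<in>T1. mu b) else 0) * real_of_int (F a))"
  proof -
    have "B2 \<noteq> {}" using m2ge unfolding m2_def by auto
    then obtain a0 where a0: "a0 \<in> B2" by blast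
    have a0T: "a0 \<in> T1" using a0 unfolding B2_def T1_def by auto
    have "mu a0 * (real_of_int (F a0) - 1) \<le> (\<Sum>a\<in>T1. mu a * (real_of_int (F a) - 1))"
      using fins(3) nonneg a0T by (intro member_le_sum) (auto simp: T1_def)
    moreover have "0 < mu a0 * (real_of_int (F a0) - 1)" using a0 pos subs(3) unfolding B2_def by auto
    moreover have "(\<Sum>a\<in>T1. mu a * (real_of_int (F a) - 1)) = (\<Sum>a\<in>T1. mu a * real_of_int (F a)) - (\<Sum>a\<in>T1. mu a)"
      by (simp add: algebra_simps sum_subtractf)
    ultimately have "(\<Sum>a\<in>T1. mu a) < (\<Sum>a\<in>T1. mu a * real_of_int (F a))" by linarith
    then have "1 < (\<Sum>a\<in>T1. mu a * real_of_int (F a)) / (\<Sum>b\<in>T1. mu b)" using MT by simp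
    then show ?thesis using su(2)[of "\<lambda>a. real_of_int (F a)"] by simp
  qed
  show ?thesis using tail[OF kw(1-10) su(1) sd(1) Fu Fd] .
qed

end

context gf begin

lemma core:
  "\<exists>n j::int. \<forall>\<alpha> \<beta>. \<alpha> \<noteq> 0 \<or> \<beta> \<noteq> 0 \<longrightarrow> (\<exists>t. feas mu t \<and>
     0 < (\<Sum>a\<in>supp_seq mu. t a * (\<alpha> * (real_of_int (G a) - real_of_int n) + \<beta> * (real_of_int (F a) - real_of_int j))))"
proof (cases "(\<exists>a\<in>supp_seq mu. F a > 0) \<and> (\<exists>a\<in>supp_seq mu. F a < 0)")
  case True
  then show ?thesis using caseA by blast
next
  case False
  show ?thesis
  proof (cases "\<forall>a\<in>supp_seq mu. 0 \<le> F a")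
    case True
    then show ?thesis by (rule caseB)
  next
    case False2: False
    have le: "\<forall>a\<in>supp_seq mu. 0 \<le> - F a" using False False2 by force
    interpret neg: gf mu "\<lambda>a. - F a" "\<lambda>a. - G a"
    proof
      show "\<And>a. 0 \<le> mu a" by (rule nonneg)
      show "finite (supp_seq mu)" by (rule finS)
      show "\<And>a. mu a \<le> 1/2" by (rule half)
      show "(\<Sum>a\<in>supp_seq mu. mu a) = 399/100" by (rule total)
      show "\<And>a b. - G a = - G b \<Longrightarrow> - F a = - F b \<Longrightarrow> a = b" using inj by simp
      show "\<And>\<alpha> \<beta> \<gamma>. \<alpha> \<noteq> 0 \<or> \<beta> \<noteq> 0 \<Longrightarrow>
        (\<Sum>a\<in>{a\<in>supp_seq mu. \<alpha> * real_of_int (- G a) + \<beta> * real_of_int (- F a) = \<gamma>}. mu a) \<le> 3/2"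
      proof -
        fix \<alpha> \<beta> \<gamma> :: real assume "\<alpha> \<noteq> 0 \<or> \<beta> \<noteq> 0"
        then have "- \<alpha> \<noteq> 0 \<or> - \<beta> \<noteq> 0" by simp
        from lines[OF this, of \<gamma>]
        show "(\<Sum>a\<in>{a\<in>supp_seq mu. \<alpha> * real_of_int (- G a) + \<beta> * real_of_int (- F a) = \<gamma>}. mu a) \<le> 3/2"
          by simp
      qed
      show "(\<Sum>a\<in>{a\<in>supp_seq mu. - F a = 0}. mu a) = 3/2" using row0 by simp
    qed
    obtain n j :: int where H: "\<forall>\<alpha> \<beta>. \<alpha> \<noteq> 0 \<or> \<beta> \<noteq> 0 \<longrightarrow> (\<exists>t. feas mu t \<and>
     0 < (\<Sum>a\<in>supp_seq mu. t a * (\<alpha> * (real_of_int (- G a) - real_of_int n) + \<beta> * (real_of_int (- F a) - real_of_int j))))"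
      using neg.caseB[OF le] by blast
    have "\<forall>\<alpha> \<beta>. \<alpha> \<noteq> 0 \<or> \<beta> \<noteq> 0 \<longrightarrow> (\<exists>t. feas mu t \<and>
     0 < (\<Sum>a\<in>supp_seq mu. t a * (\<alpha> * (real_of_int (G a) - real_of_int (- n)) + \<beta> * (real_of_int (F a) - real_of_int (- j)))))"
    proof (intro allI impI)
      fix \<alpha> \<beta> :: real assume "\<alpha> \<noteq> 0 \<or> \<beta> \<noteq> 0"
      then have "- \<alpha> \<noteq> 0 \<or> - \<beta> \<noteq> 0" by simp
      then obtain t where t: "feas mu t"
        "0 < (\<Sum>a\<in>supp_seq mu. t a * ((- \<alpha>) * (real_of_int (- G a) - real_of_int n) + (- \<beta>) * (real_of_int (- F a) - real_of_int j)))"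
        using H by blast
      have "(\<Sum>a\<in>supp_seq mu. t a * ((- \<alpha>) * (real_of_int (- G a) - real_of_int n) + (- \<beta>) * (real_of_int (- F a) - real_of_int j)))
        = (\<Sum>a\<in>supp_seq mu. t a * (\<alpha> * (real_of_int (G a) - real_of_int (- n)) + \<beta> * (real_of_int (F a) - real_of_int (- j))))"
        by (intro sum.cong) (auto simp: algebra_simps)
      then show "\<exists>t. feas mu t \<and>
        0 < (\<Sum>a\<in>supp_seq mu. t a * (\<alpha> * (real_of_int (G a) - real_of_int (- n)) + \<beta> * (real_of_int (F a) - real_of_int (- j))))"
        using t by auto
    qed
    then show ?thesis by blast
  qed
qed

end

lemma sigma_convex: "convex (Sigma1R mu)"
  unfolding convex_def
proof (intro ballI allI impI)
  fix x y and u v :: real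
  assume x: "x \<in> Sigma1R mu" and y: "y \<in> Sigma1R mu" and uv: "0 \<le> u" "0 \<le> v" "u + v = 1"
  obtain t1 where t1: "x = (\<Sum>a\<in>supp_seq mu. t1 a *\<^sub>R emb a)" "\<forall>a\<in>supp_seq mu. 0 \<le> t1 a \<and> t1 a \<le> mu a"
    "(\<Sum>a\<in>supp_seq mu. t1 a) = 1" using x unfolding Sigma1R_def by blast
  obtain t2 where t2: "y = (\<Sum>a\<in>supp_seq mu. t2 a *\<^sub>R emb a)" "\<forall>a\<in>supp_seq mu. 0 \<le> t2 a \<and> t2 a \<le> mu a"
    "(\<Sum>a\<in>supp_seq mu. t2 a) = 1" using y unfolding Sigma1R_def by blast
  define t where "t a = u * t1 a + v * t2 a" for a
  have "u *\<^sub>R x + v *\<^sub>R y = (\<Sum>a\<in>supp_seq mu. t a *\<^sub>R emb a)"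
    unfolding t1(1) t2(1) t_def by (simp add: scaleR_sum_right sum.distrib scaleR_add_left)
  moreover have "\<forall>a\<in>supp_seq mu. 0 \<le> t a \<and> t a \<le> mu a"
  proof
    fix a assume "a \<in> supp_seq mu"
    then have "0 \<le> t1 a" "t1 a \<le> mu a" "0 \<le> t2 a" "t2 a \<le> mu a" using t1 t2 by auto
    then have "u * t1 a \<le> u * mu a" "v * t2 a \<le> v * mu a" "0 \<le> u * t1 a" "0 \<le> v * t2 a"
      using uv by (auto intro: mult_left_mono)
    then show "0 \<le> t a \<and> t a \<le> mu a" unfolding t_def using uv
      by (metis add_mono add_nonneg_nonneg distrib_right mult_1)
  qed
  moreover have "(\<Sum>a\<in>supp_seq mu. t a) = 1" unfolding t_def using t1(3) t2(3) uv
    by (simp add: sum.distrib sum_distrib_left[symmetric])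
  ultimately show "u *\<^sub>R x + v *\<^sub>R y \<in> Sigma1R mu" unfolding Sigma1R_def by blast
qed

lemma line_coords:
  fixes \<alpha> \<beta> s r :: real
  assumes "\<alpha> \<noteq> 0 \<or> \<beta> \<noteq> 0"
  shows "s = (\<alpha> * s + \<beta> * r) * \<alpha> / (\<alpha>\<^sup>2 + \<beta>\<^sup>2) + ((\<beta> * s - \<alpha> * r) / (\<alpha>\<^sup>2 + \<beta>\<^sup>2)) * \<beta>"
    and "r = (\<alpha> * s + \<beta> * r) * \<beta> / (\<alpha>\<^sup>2 + \<beta>\<^sup>2) - ((\<beta> * s - \<alpha> * r) / (\<alpha>\<^sup>2 + \<beta>\<^sup>2)) * \<alpha>"
proof -
  define N where "N = \<alpha>\<^sup>2 + \<beta>\<^sup>2"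
  have N: "N \<noteq> 0" using assms unfolding N_def by (auto simp: add_nonneg_eq_0_iff)
  have e1: "(\<alpha> * s + \<beta> * r) * \<alpha> + (\<beta> * s - \<alpha> * r) * \<beta> = s * N"
    unfolding N_def by (simp add: power2_eq_square algebra_simps)
  have e2: "(\<alpha> * s + \<beta> * r) * \<beta> - (\<beta> * s - \<alpha> * r) * \<alpha> = r * N"
    unfolding N_def by (simp add: power2_eq_square algebra_simps)
  have "(\<alpha> * s + \<beta> * r) * \<alpha> / N + ((\<beta> * s - \<alpha> * r) / N) * \<beta> = ((\<alpha> * s + \<beta> * r) * \<alpha> + (\<beta> * s - \<alpha> * r) * \<beta>) / N"
    by (simp add: add_divide_distrib)
  also have "\<dots> = s" using e1 N by simp
  finally show "s = (\<alpha> * s + \<beta> * r) * \<alpha> / (\<alpha>\<^sup>2 + \<beta>\<^sup>2) + ((\<beta> * s - \<alpha> * r) / (\<alpha>\<^sup>2 + \<beta>\<^sup>2)) * \<beta>"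
    unfolding N_def by simp
  have "(\<alpha> * s + \<beta> * r) * \<beta> / N - ((\<beta> * s - \<alpha> * r) / N) * \<alpha> = ((\<alpha> * s + \<beta> * r) * \<beta> - (\<beta> * s - \<alpha> * r) * \<alpha>) / N"
    by (simp add: divide_simps)
  also have "\<dots> = r" using e2 N by simp
  finally show "r = (\<alpha> * s + \<beta> * r) * \<beta> / (\<alpha>\<^sup>2 + \<beta>\<^sup>2) - ((\<beta> * s - \<alpha> * r) / (\<alpha>\<^sup>2 + \<beta>\<^sup>2)) * \<alpha>"
    unfolding N_def by simp
qed

theorem lemma3p4:
  fixes mu :: "int \<times> int \<Rightarrow> real"
  assumes "real_seq mu"
    and "seq_size mu = 3.99"
    and "\<forall>a. mu a \<le> 1/2"
    and "\<forall>L. is_line L \<longrightarrow> points_in mu L \<le> 3/2"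
    and "\<exists>L. is_line L \<and> points_in mu L = 3/2"
  shows "\<exists>z::int \<times> int. emb z \<in> interior (Sigma1R mu)"
proof -
  have nn: "\<And>a. 0 \<le> mu a" and fin: "finite (supp_seq mu)"
    using assms(1) unfolding real_seq_def supp_seq_def by auto
  have half: "\<And>a. mu a \<le> 1/2" using assms(3) by blast
  have tot: "(\<Sum>a\<in>supp_seq mu. mu a) = 399/100" using assms(2) unfolding seq_size_def by simp
  obtain L where L: "is_line L" "points_in mu L = 3/2" using assms(5) by blast
  obtain P V where PV: "V \<noteq> 0" "L = {P + t *\<^sub>R V | t. True}" using L(1) unfolding is_line_def by blast
  define R0 where "R0 = {a\<in>supp_seq mu. emb a \<in> L}"
  have sR0: "(\<Sum>a\<in>R0. mu a) = 3/2" using L(2) unfolding points_in_def R0_def .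
  have "R0 \<noteq> {}" using sR0 by auto
  then obtain p where pR: "p \<in> R0" by blast
  obtain q where qR: "q \<in> R0" and pq: "q \<noteq> p"
  proof (rule ccontr)
    assume "\<not> thesis"
    then have "\<forall>q\<in>R0. q = p" using that by blast
    then have "R0 = {p}" using pR by blast
    then show False using sR0 half[of p] by simp
  qed
  obtain p1 p2 where p: "p = (p1, p2)" by (cases p)
  obtain q1 q2 where q: "q = (q1, q2)" by (cases q)
  define d1 where "d1 = q1 - p1"
  define d2 where "d2 = q2 - p2"
  have dnz: "d1 \<noteq> 0 \<or> d2 \<noteq> 0" using pq p q unfolding d1_def d2_def by auto
  define g where "g = gcd d1 d2"
  have gpos: "0 < g" using dnz unfolding g_def by (simp add: gcd_pos_int)
  define v1 where "v1 = d1 div g"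
  define v2 where "v2 = d2 div g"
  have dv: "d1 = v1 * g" "d2 = v2 * g" unfolding v1_def v2_def g_def by simp_all
  have "coprime v1 v2" unfolding v1_def v2_def g_def by (rule div_gcd_coprime[OF dnz])
  then have "gcd v1 v2 = 1" by simp
  then obtain x y where xy: "x * v1 + y * v2 = 1" using bezout_int[of v1 v2] by auto
  have xyr: "real_of_int x * real_of_int v1 + real_of_int y * real_of_int v2 = 1"
    using arg_cong[OF xy, of real_of_int] by simp
  define F where "F a = v1 * (snd a - p2) - v2 * (fst a - p1)" for a :: "int \<times> int"
  define G where "G a = (fst a - p1) * x + (snd a - p2) * y" for a :: "int \<times> int"
  define Fr where "Fr z = real_of_int v1 * (snd z - real_of_int p2) - real_of_int v2 * (fst z - real_of_int p1)" for z :: "real \<times> real"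
  define Gr where "Gr z = (fst z - real_of_int p1) * real_of_int x + (snd z - real_of_int p2) * real_of_int y" for z :: "real \<times> real"
  have FrG: "Fr (emb a) = real_of_int (F a)" "Gr (emb a) = real_of_int (G a)" for a
    unfolding Fr_def F_def Gr_def G_def emb_def by simp_all
  define V' where "V' = (real_of_int v1, real_of_int v2)"
  define W' where "W' = (- real_of_int y, real_of_int x)"
  have recon: "z = emb p + Gr z *\<^sub>R V' + Fr z *\<^sub>R W'" for z
  proof -
    have "fst z = real_of_int p1 + Gr z * real_of_int v1 - Fr z * real_of_int y"
    proof -
      have "Gr z * real_of_int v1 - Fr z * real_of_int y = (fst z - real_of_int p1) * (real_of_int x * real_of_int v1 + real_of_int y * real_of_int v2)"
        unfolding Gr_def Fr_def by (simp add: algebra_simps)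
      then show ?thesis using xyr by simp
    qed
    moreover have "snd z = real_of_int p2 + Gr z * real_of_int v2 + Fr z * real_of_int x"
    proof -
      have "Gr z * real_of_int v2 + Fr z * real_of_int x = (snd z - real_of_int p2) * (real_of_int x * real_of_int v1 + real_of_int y * real_of_int v2)"
        unfolding Gr_def Fr_def by (simp add: algebra_simps)
      then show ?thesis using xyr by simp
    qed
    ultimately show ?thesis unfolding emb_def V'_def W'_def p by (simp add: prod_eq_iff)
  qed
  have coords: "Gr (emb p + c1 *\<^sub>R V' + c2 *\<^sub>R W') = c1" "Fr (emb p + c1 *\<^sub>R V' + c2 *\<^sub>R W') = c2" for c1 c2
  proof -
    have "Gr (emb p + c1 *\<^sub>R V' + c2 *\<^sub>R W') = c1 * (real_of_int x * real_of_int v1 + real_of_int y * real_of_int v2)"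
      unfolding Gr_def emb_def V'_def W'_def p by (simp add: algebra_simps)
    then show "Gr (emb p + c1 *\<^sub>R V' + c2 *\<^sub>R W') = c1" using xyr by simp
    have "Fr (emb p + c1 *\<^sub>R V' + c2 *\<^sub>R W') = c2 * (real_of_int x * real_of_int v1 + real_of_int y * real_of_int v2)"
      unfolding Fr_def emb_def V'_def W'_def p by (simp add: algebra_simps)
    then show "Fr (emb p + c1 *\<^sub>R V' + c2 *\<^sub>R W') = c2" using xyr by simp
  qed
  have isl: "is_line {z. \<alpha> * Gr z + \<beta> * Fr z = \<gamma>}" if ab: "\<alpha> \<noteq> 0 \<or> \<beta> \<noteq> 0" for \<alpha> \<beta> \<gamma>
  proof -
    define N where "N = \<alpha>\<^sup>2 + \<beta>\<^sup>2"
    have N: "N \<noteq> 0" using ab unfolding N_def by (auto simp: add_nonneg_eq_0_iff)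
    define P0 where "P0 = emb p + (\<gamma> * \<alpha> / N) *\<^sub>R V' + (\<gamma> * \<beta> / N) *\<^sub>R W'"
    define D where "D = \<beta> *\<^sub>R V' - \<alpha> *\<^sub>R W'"
    have "D \<noteq> 0"
    proof
      assume "D = 0"
      then have "\<beta> * real_of_int v1 + \<alpha> * real_of_int y = 0" "\<beta> * real_of_int v2 - \<alpha> * real_of_int x = 0"
        unfolding D_def V'_def W'_def by (simp_all add: prod_eq_iff)
      note e = this
      have "\<beta> * (real_of_int x * real_of_int v1 + real_of_int y * real_of_int v2) =
          real_of_int x * (\<beta> * real_of_int v1 + \<alpha> * real_of_int y) + real_of_int y * (\<beta> * real_of_int v2 - \<alpha> * real_of_int x)"
        by (simp add: algebra_simps)
      also have "\<dots> = 0" using e by simp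
      finally have z1: "\<beta> * (real_of_int x * real_of_int v1 + real_of_int y * real_of_int v2) = 0" .
      have "\<alpha> * (real_of_int x * real_of_int v1 + real_of_int y * real_of_int v2) =
          real_of_int v2 * (\<beta> * real_of_int v1 + \<alpha> * real_of_int y) - real_of_int v1 * (\<beta> * real_of_int v2 - \<alpha> * real_of_int x)"
        by (simp add: algebra_simps)
      also have "\<dots> = 0" using e by simp
      finally have z2: "\<alpha> * (real_of_int x * real_of_int v1 + real_of_int y * real_of_int v2) = 0" .
      note z1 z2
      then show False using xyr ab by simp
    qed
    moreover have "{z. \<alpha> * Gr z + \<beta> * Fr z = \<gamma>} = {P0 + t *\<^sub>R D | t. True}"
    proof (intro set_eqI iffI)
      fix z assume "z \<in> {z. \<alpha> * Gr z + \<beta> * Fr z = \<gamma>}"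
      then have zg: "\<alpha> * Gr z + \<beta> * Fr z = \<gamma>" by simp
      define t where "t = (\<beta> * Gr z - \<alpha> * Fr z) / N"
      have c1: "Gr z = \<gamma> * \<alpha> / N + t * \<beta>" using line_coords(1)[OF ab, where s="Gr z" and r="Fr z"] zg unfolding t_def N_def by simp
      have c2: "Fr z = \<gamma> * \<beta> / N - t * \<alpha>" using line_coords(2)[OF ab, where s="Gr z" and r="Fr z"] zg unfolding t_def N_def by simp
      have "z = emb p + Gr z *\<^sub>R V' + Fr z *\<^sub>R W'" by (rule recon)
      also have "\<dots> = P0 + t *\<^sub>R D" unfolding c1 c2 P0_def D_def by (simp add: algebra_simps)
      finally show "z \<in> {P0 + t *\<^sub>R D | t. True}" by blast
    next
      fix z assume "z \<in> {P0 + t *\<^sub>R D | t. True}"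
      then obtain t where zt: "z = P0 + t *\<^sub>R D" by blast
      have "z = emb p + (\<gamma> * \<alpha> / N + t * \<beta>) *\<^sub>R V' + (\<gamma> * \<beta> / N - t * \<alpha>) *\<^sub>R W'"
        unfolding zt P0_def D_def by (simp add: algebra_simps)
      then have "Gr z = \<gamma> * \<alpha> / N + t * \<beta>" "Fr z = \<gamma> * \<beta> / N - t * \<alpha>" using coords by simp_all
      then have "\<alpha> * Gr z + \<beta> * Fr z = \<alpha> * (\<gamma> * \<alpha> / N + t * \<beta>) + \<beta> * (\<gamma> * \<beta> / N - t * \<alpha>)" by simp
      also have "\<dots> = \<gamma> * (\<alpha> * \<alpha> + \<beta> * \<beta>) / N" using N by (simp add: field_simps)
      also have "\<dots> = \<gamma>" using N unfolding N_def by (simp add: power2_eq_square)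
      finally show "z \<in> {z. \<alpha> * Gr z + \<beta> * Fr z = \<gamma>}" by simp
    qed
    ultimately show ?thesis unfolding is_line_def by blast
  qed
  have embinj: "emb a = emb b \<Longrightarrow> a = b" for a b unfolding emb_def by (simp add: prod_eq_iff)
  have injFG: "\<And>a b. G a = G b \<Longrightarrow> F a = F b \<Longrightarrow> a = b"
  proof -
    fix a b assume "G a = G b" "F a = F b"
    then have "emb a = emb b" using recon[of "emb a"] recon[of "emb b"] FrG by metis
    then show "a = b" by (rule embinj)
  qed
  have linesFG: "(\<Sum>a\<in>{a\<in>supp_seq mu. \<alpha> * real_of_int (G a) + \<beta> * real_of_int (F a) = \<gamma>}. mu a) \<le> 3/2"
    if ab: "\<alpha> \<noteq> 0 \<or> \<beta> \<noteq> 0" for \<alpha> \<beta> \<gamma>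
  proof -
    have "{a\<in>supp_seq mu. \<alpha> * real_of_int (G a) + \<beta> * real_of_int (F a) = \<gamma>} =
        {a\<in>supp_seq mu. emb a \<in> {z. \<alpha> * Gr z + \<beta> * Fr z = \<gamma>}}" using FrG by auto
    then have "(\<Sum>a\<in>{a\<in>supp_seq mu. \<alpha> * real_of_int (G a) + \<beta> * real_of_int (F a) = \<gamma>}. mu a)
        = points_in mu {z. \<alpha> * Gr z + \<beta> * Fr z = \<gamma>}" unfolding points_in_def by simp
    also have "\<dots> \<le> 3/2" using assms(4) isl[OF ab] by blast
    finally show ?thesis .
  qed
  have onL: "F a = 0" if aL: "emb a \<in> L" for a
  proof -
    obtain ta where ta: "emb a = P + ta *\<^sub>R V" using aL PV(2) by blast
    have "emb p \<in> L" using pR unfolding R0_def by simp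
    then obtain tp where tp: "emb p = P + tp *\<^sub>R V" using PV(2) by blast
    have "emb q \<in> L" using qR unfolding R0_def by simp
    then obtain tq where tq: "emb q = P + tq *\<^sub>R V" using PV(2) by blast
    have e1: "real_of_int (fst a) - real_of_int p1 = (ta - tp) * fst V" "real_of_int (snd a) - real_of_int p2 = (ta - tp) * snd V"
      using arg_cong[OF ta, of fst] arg_cong[OF tp, of fst] arg_cong[OF ta, of snd] arg_cong[OF tp, of snd]
      unfolding emb_def p by (simp_all add: algebra_simps)
    have e2: "real_of_int d1 = (tq - tp) * fst V" "real_of_int d2 = (tq - tp) * snd V"
      using arg_cong[OF tq, of fst] arg_cong[OF tp, of fst] arg_cong[OF tq, of snd] arg_cong[OF tp, of snd]
      unfolding emb_def p q d1_def d2_def by (simp_all add: algebra_simps)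
    have "real_of_int (F a) * real_of_int g = real_of_int d1 * (real_of_int (snd a) - real_of_int p2) - real_of_int d2 * (real_of_int (fst a) - real_of_int p1)"
      unfolding F_def dv by (simp add: algebra_simps)
    also have "\<dots> = 0" unfolding e1 e2 by (simp add: algebra_simps)
    finally have "real_of_int (F a) * real_of_int g = 0" .
    then show "F a = 0" using gpos by simp
  qed
  have row0FG: "(\<Sum>a\<in>{a\<in>supp_seq mu. F a = 0}. mu a) = 3/2"
  proof (rule antisym)
    have "{a\<in>supp_seq mu. 0 * real_of_int (G a) + 1 * real_of_int (F a) = 0} = {a\<in>supp_seq mu. F a = 0}" by auto
    then show "(\<Sum>a\<in>{a\<in>supp_seq mu. F a = 0}. mu a) \<le> 3/2" using linesFG[of 0 1 0] by simp
    have "R0 \<subseteq> {a\<in>supp_seq mu. F a = 0}" using onL unfolding R0_def by blast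
    moreover have "finite {a\<in>supp_seq mu. F a = 0}" using fin by simp
    ultimately have "(\<Sum>a\<in>R0. mu a) \<le> (\<Sum>a\<in>{a\<in>supp_seq mu. F a = 0}. mu a)" using nn by (intro sum_mono2) auto
    then show "3/2 \<le> (\<Sum>a\<in>{a\<in>supp_seq mu. F a = 0}. mu a)" using sR0 by simp
  qed
  interpret gf mu F G
    using nn fin half tot injFG linesFG row0FG by unfold_locales auto
  obtain n j :: int where nj: "\<forall>\<alpha> \<beta>. \<alpha> \<noteq> 0 \<or> \<beta> \<noteq> 0 \<longrightarrow> (\<exists>t. feas mu t \<and>
     0 < (\<Sum>a\<in>supp_seq mu. t a * (\<alpha> * (real_of_int (G a) - real_of_int n) + \<beta> * (real_of_int (F a) - real_of_int j))))"
    using core by blast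
  define z where "z = (p1 + n * v1 - j * y, p2 + n * v2 + j * x)"
  have Gz: "G z = n"
  proof -
    have "G z = n * (x * v1 + y * v2)" unfolding G_def z_def by (simp add: algebra_simps)
    then show ?thesis using xy by simp
  qed
  have Fz: "F z = j"
  proof -
    have "F z = j * (x * v1 + y * v2)" unfolding F_def z_def by (simp add: algebra_simps)
    then show ?thesis using xy by simp
  qed
  have ip: "u \<bullet> emb a = u \<bullet> emb p + real_of_int (G a) * (u \<bullet> V') + real_of_int (F a) * (u \<bullet> W')" for u a
  proof -
    have "u \<bullet> emb a = u \<bullet> (emb p + Gr (emb a) *\<^sub>R V' + Fr (emb a) *\<^sub>R W')" using recon[of "emb a"] by simp
    then show ?thesis using FrG by (simp add: inner_add_right)
  qed
  have "emb z \<in> interior (Sigma1R mu)"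
  proof (rule interior_by_witness[OF sigma_convex])
    fix u :: "real \<times> real" assume u0: "u \<noteq> 0"
    define \<alpha> where "\<alpha> = u \<bullet> V'"
    define \<beta> where "\<beta> = u \<bullet> W'"
    have ab: "\<alpha> \<noteq> 0 \<or> \<beta> \<noteq> 0"
    proof (rule ccontr)
      assume "\<not> (\<alpha> \<noteq> 0 \<or> \<beta> \<noteq> 0)"
      then have h: "fst u * real_of_int v1 + snd u * real_of_int v2 = 0" "- (fst u * real_of_int y) + snd u * real_of_int x = 0"
        unfolding \<alpha>_def \<beta>_def V'_def W'_def by (cases u; simp)+
      have "fst u = fst u * (real_of_int x * real_of_int v1 + real_of_int y * real_of_int v2)" using xyr by simp
      also have "\<dots> = real_of_int x * (fst u * real_of_int v1 + snd u * real_of_int v2) - real_of_int v2 * (- (fst u * real_of_int y) + snd u * real_of_int x)"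
        by (simp add: algebra_simps)
      also have "\<dots> = 0" using h by simp
      finally have f0: "fst u = 0" .
      have "snd u = snd u * (real_of_int x * real_of_int v1 + real_of_int y * real_of_int v2)" using xyr by simp
      also have "\<dots> = real_of_int y * (fst u * real_of_int v1 + snd u * real_of_int v2) + real_of_int v1 * (- (fst u * real_of_int y) + snd u * real_of_int x)"
        by (simp add: algebra_simps)
      also have "\<dots> = 0" using h by simp
      finally have "snd u = 0" .
      then show False using f0 u0 by (simp add: prod_eq_iff)
    qed
    obtain t where t: "feas mu t"
      "0 < (\<Sum>a\<in>supp_seq mu. t a * (\<alpha> * (real_of_int (G a) - real_of_int n) + \<beta> * (real_of_int (F a) - real_of_int j)))"
      using nj ab by blast
    define X where "X = (\<Sum>a\<in>supp_seq mu. t a *\<^sub>R emb a)"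
    have XS: "X \<in> Sigma1R mu" using t(1) unfolding X_def Sigma1R_def feas_def by blast
    have st: "(\<Sum>a\<in>supp_seq mu. t a) = 1" using t(1) unfolding feas_def by simp
    have "u \<bullet> X - u \<bullet> emb z = (\<Sum>a\<in>supp_seq mu. t a * (u \<bullet> emb a)) - (\<Sum>a\<in>supp_seq mu. t a) * (u \<bullet> emb z)"
      unfolding X_def st by (simp add: inner_sum_right)
    also have "\<dots> = (\<Sum>a\<in>supp_seq mu. t a * (u \<bullet> emb a - u \<bullet> emb z))"
      by (simp add: sum_distrib_right right_diff_distrib sum_subtractf)
    also have "\<dots> = (\<Sum>a\<in>supp_seq mu. t a * (\<alpha> * (real_of_int (G a) - real_of_int n) + \<beta> * (real_of_int (F a) - real_of_int j)))"
    proof (intro sum.cong refl)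
      fix a
      have ia: "u \<bullet> emb a = u \<bullet> emb p + real_of_int (G a) * \<alpha> + real_of_int (F a) * \<beta>"
        using ip[of u a] unfolding \<alpha>_def \<beta>_def .
      have iz: "u \<bullet> emb z = u \<bullet> emb p + real_of_int n * \<alpha> + real_of_int j * \<beta>"
        using ip[of u z] Gz Fz unfolding \<alpha>_def \<beta>_def by simp
      show "t a * (u \<bullet> emb a - u \<bullet> emb z) = t a * (\<alpha> * (real_of_int (G a) - real_of_int n) + \<beta> * (real_of_int (F a) - real_of_int j))"
        unfolding ia iz by (simp add: algebra_simps)
    qed
    finally have "0 < u \<bullet> X - u \<bullet> emb z" using t(2) by simp
    then show "\<exists>x\<in>Sigma1R mu. u \<bullet> emb z < u \<bullet> x" using XS by force
  qed
  then show ?thesis by blast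
qed

end
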